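(* Let $k\ge 3$ and $\frac1k<r_0<\frac1{k-1}$, and let $\sigma_k$, the lenses $L_j$ and the counts $m_j=\#(\mathcal P_\lambda\cap L_j)$, $j=1,\dots,k-1$, be as in the context. Then for every integer $n\ge 0$, $$\mathbb P\big(\sigma_k=n \,\big|\, m_1,\dots,m_{k-1}\big)=\frac{1}{\binom{m_1+\cdots+m_{k-1}}{m_1,\ldots,m_{k-1}}}\sum_{w\in\mathcal P(\mathcal M_{k-2})}\ \sum_{\substack{\Pi\in\mathcal P([m_{k-2}\times m_{k-1}])\\ S(w)\cdot\pi^\star(\Pi)=n}}\ \prod_{r=0}^{m_{k-2}}\binom{\pi^\star(\Pi)(r)+\sum_{l=1}^{k-3}\pi^\star_{k-2,l}(w)(r)}{\pi^\star(\Pi)(r)},$$ where the outer sum runs over words in $\mathcal P(\mathcal M_{k-2})$ built from the counts $m_1,\dots,m_{k-2}$ (an empty sum over $l$ equals $0$).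
   Context: Fix $\lambda>0$. Let $\mathcal P_\lambda$ be a homogeneous Poisson point process of intensity $\lambda$ on $[0,1]$. Set $V=\mathcal P_\lambda\cup\{0,1\}$ and let $G$ be the graph on $V$ in which distinct $x,y$ are adjacent iff $|x-y|<r_0$. A $k$-hop path from $0$ to $1$ is a sequence of vertices $0=v_0,v_1,\dots,v_k=1$ of $G$ with $v_{i-1}$ adjacent to $v_i$ for all $i$. $\sigma_k$ denotes the number of such paths. For $j=1,\dots,k-1$, the lens is $L_j=(1-(k-j)r_0,\; j r_0)$. Under $\frac1k<r_0<\frac1{k-1}$ these are pairwise disjoint intervals of length $kr_0-1>0$. Set $m_j=\#(\mathcal P_\lambda\cap L_j)$. Words / lattice paths: for nonnegative integers $m_1,\dots,m_d$, $\mathcal P(\mathcal M_d)$ is the set of words of length $m_1+\dots+m_d$ in letters $e_1,\dots,e_d$ containing exactly $m_i$ copies of $e_i$. Equivalently, these are lattice paths with unit steps $e_i$ from $\mathbf 0$ to $(m_1,\dots,m_d)$ in $\{0,\dots,m_1\}\times\cdots\times\{0,\dots,m_d\}$. For a word $w$ and $i\neq j$, write $\pi_{i,j}(w)(s)$, $s=1,\dots,m_j$, for the number of occurrences of $e_i$ in $w$ preceding the $s$-th occurrence of $e_j$. Its multiplicity function is $\pi^\star_{i,j}(w)(r)=\#\{s:\pi_{i,j}(w)(s)=r\}$ for $r=0,\dots,m_i$. In particular, $\pi^\star_{k-2,l}(w)(r)$ is the number of letters $e_l$ lying strictly after the $r$-th and before the $(r+1)$-th occurrence of $e_{k-2}$.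 For $w\in\mathcal P(\mathcal M_d)$ and $t=0,\dots,m_d$, $S_t(w)$ is the number of $d$-tuples of positions $p_1<\dots<p_d$ in $w$ such that the letter at $p_i$ is $e_i$ for each $i$, and $p_d$ is at or before the $t$-th occurrence of $e_d$. So $S_0=0$, and for $d=1$, $S_t=t$. Write $S(w)=(S_0(w),\dots,S_{m_d}(w))$. $\mathcal P([m_{k-2}\times m_{k-1}])$ is the set of words with $m_{k-2}$ letters $a$ and $m_{k-1}$ letters $b$. For such $\Pi$, $\pi(\Pi)(s)$ is the number of $a$'s preceding the $s$-th $b$ ($s=1,\dots,m_{k-1}$), and $\pi^\star(\Pi)(r)=\#\{s:\pi(\Pi)(s)=r\}$ for $r=0,\dots,m_{k-2}$. The dot product is $S(w)\cdot\pi^\star(\Pi)=\sum_{r=0}^{m_{k-2}}S_r(w)\,\pi^\star(\Pi)(r)$. The multinomial coefficient is $\binom{m_1+\cdots+m_{k-1}}{m_1,\ldots,m_{k-1}}=\frac{(m_1+\dots+m_{k-1})!}{m_1!\cdots m_{k-1}!}$. *)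

theory Defs
  imports "HOL-Probability.Probability"
begin

text \<open>Sample space of the Poisson point process of intensity lam on [0,1]:
  a Poisson(lam) number N of points and an i.i.d. sequence X of Uniform[0,1]
  positions; the process is the point set X ` {..<N}.\<close>

definition PPP :: "real \<Rightarrow> (nat \<times> (nat \<Rightarrow> real)) measure" where
  "PPP lam = pair_measure (measure_pmf (poisson_pmf lam))
      (PiM UNIV (\<lambda>_::nat. uniform_measure lborel {0..1::real}))"

definition points :: "nat \<times> (nat \<Rightarrow> real) \<Rightarrow> real set" where
  "points \<omega> = snd \<omega> ` {..<fst \<omega>}"

definition vertices :: "nat \<times> (nat \<Rightarrow> real) \<Rightarrow> real set" where
  "vertices \<omega> = points \<omega> \<union> {0, 1}"

definition adj :: "real \<Rightarrow> real \<Rightarrow> real \<Rightarrow> bool" where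
  "adj r0 x y \<longleftrightarrow> x \<noteq> y \<and> \<bar>x - y\<bar> < r0"

definition hop_paths :: "real \<Rightarrow> nat \<Rightarrow> nat \<times> (nat \<Rightarrow> real) \<Rightarrow> real list set" where
  "hop_paths r0 k \<omega> = {vs. length vs = Suc k \<and> set vs \<subseteq> vertices \<omega> \<and>
      vs ! 0 = 0 \<and> vs ! k = 1 \<and> (\<forall>i<k. adj r0 (vs ! i) (vs ! Suc i))}"

definition sigma_k :: "real \<Rightarrow> nat \<Rightarrow> nat \<times> (nat \<Rightarrow> real) \<Rightarrow> nat" where
  "sigma_k r0 k \<omega> = card (hop_paths r0 k \<omega>)"

definition lens :: "real \<Rightarrow> nat \<Rightarrow> nat \<Rightarrow> real set" where
  "lens r0 k j = {1 - real (k - j) * r0 <..< real j * r0}"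

definition lens_count :: "real \<Rightarrow> nat \<Rightarrow> nat \<Rightarrow> nat \<times> (nat \<Rightarrow> real) \<Rightarrow> nat" where
  "lens_count r0 k j \<omega> = card (points \<omega> \<inter> lens r0 k j)"

text \<open>Words of P(M_d) for counts c 1, ..., c d: letter e_i is encoded as the number i.\<close>
definition words :: "nat \<Rightarrow> (nat \<Rightarrow> nat) \<Rightarrow> nat list set" where
  "words d c = {w. set w \<subseteq> {1..d} \<and> (\<forall>i\<in>{1..d}. count_list w i = c i)}"

text \<open>Position (0-based index) of the s-th occurrence (s \<ge> 1) of letter a in w.\<close>
definition nth_occ :: "'a list \<Rightarrow> 'a \<Rightarrow> nat \<Rightarrow> nat" where
  "nth_occ w a s = [p \<leftarrow> [0..<length w]. w ! p = a] ! (s - 1)"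

definition pi_ij :: "'a \<Rightarrow> 'a \<Rightarrow> 'a list \<Rightarrow> nat \<Rightarrow> nat" where
  "pi_ij i j w s = count_list (take (nth_occ w j s) w) i"

definition pi_star :: "'a \<Rightarrow> 'a \<Rightarrow> 'a list \<Rightarrow> nat \<Rightarrow> nat" where
  "pi_star i j w r = card {s \<in> {1..count_list w j}. pi_ij i j w s = r}"

definition S_count :: "nat \<Rightarrow> nat list \<Rightarrow> nat \<Rightarrow> nat" where
  "S_count d w t = card {p. p \<in> {1..d} \<rightarrow>\<^sub>E {..<length w} \<and>
      (\<forall>i\<in>{1..d}. w ! (p i) = i) \<and> (\<forall>i\<in>{1..<d}. p i < p (Suc i)) \<and>
      1 \<le> t \<and> p d \<le> nth_occ w d t}"

text \<open>Words Pi in P([ma x mb]): letter a is True, letter b is False.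
  Then pi(Pi) = pi_ij True False Pi and pi*(Pi) = pi_star True False Pi.\<close>
definition words_ab :: "nat \<Rightarrow> nat \<Rightarrow> bool list set" where
  "words_ab ma mb = {P. count_list P True = ma \<and> count_list P False = mb}"

definition multinom :: "nat list \<Rightarrow> real" where
  "multinom ms = fact (sum_list ms) / (\<Prod>m\<leftarrow>ms. fact m)"

end

theory Submission
  imports Defs "HOL-Combinatorics.Multiset_Permutations"
begin


definition occs :: "'a list \<Rightarrow> 'a \<Rightarrow> nat list" where
  "occs w a = filter (\<lambda>p. w ! p = a) [0..<length w]"

lemma nth_occ_occs: "nth_occ w a s = occs w a ! (s - 1)"
  by (simp add: nth_occ_def occs_def)

lemma occs_Nil[simp]: "occs [] a = []"
  by (simp add: occs_def)

lemma occs_snoc: "occs (w @ [x]) a = occs w a @ (if x = a then [length w] else [])"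
proof -
  have fw: "filter (\<lambda>p. (w @ [x]) ! p = a) [0..<length w] = filter (\<lambda>p. w ! p = a) [0..<length w]"
    by (rule filter_cong) (auto simp: nth_append)
  have u: "[0..<length (w @ [x])] = [0..<length w] @ [length w]" by simp
  show ?thesis unfolding occs_def u filter_append using fw
    by (simp add: nth_append)
qed

lemma length_occs: "length (occs w a) = count_list w a"
  by (induction w rule: rev_induct) (auto simp: occs_snoc)

lemma set_occs: "set (occs w a) = {p. p < length w \<and> w ! p = a}"
  by (auto simp: occs_def)

lemma sorted_occs: "sorted_wrt (<) (occs w a)"
  unfolding occs_def by (intro sorted_wrt_filter) (simp add: sorted_wrt_upt)

lemma distinct_occs: "distinct (occs w a)"
  unfolding occs_def by simp

lemma occs_append: "occs (u @ v) a = occs u a @ map ((+) (length u)) (occs v a)"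
proof (induction v rule: rev_induct)
  case Nil then show ?case by simp
next
  case (snoc x v)
  have "occs (u @ v @ [x]) a = occs ((u @ v) @ [x]) a" by simp
  also have "\<dots> = occs (u @ v) a @ (if x = a then [length (u @ v)] else [])" by (rule occs_snoc)
  finally show ?case using snoc by (simp add: occs_snoc)
qed

lemma occs_Cons_same: "occs (a # v) a = 0 # map Suc (occs v a)"
  using occs_append[of "[a]" v a] by (simp add: occs_def)

lemma count_take_less:
  assumes "q < length w" "w ! q = a"
  shows "count_list (take q w) a < count_list w a"
proof -
  have w: "w = take q w @ a # drop (Suc q) w" by (rule id_take_nth_drop[OF assms(1), unfolded assms(2)])
  have "count_list (take q w @ a # drop (Suc q) w) a = count_list (take q w) a + Suc (count_list (drop (Suc q) w) a)"
    by (simp only: count_list_append count_list.simps if_True) simp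
  then have "count_list w a = count_list (take q w) a + Suc (count_list (drop (Suc q) w) a)"
    by (simp only: w[symmetric])
  then show ?thesis by simp
qed

lemma count_take_le: "count_list (take q w) a \<le> count_list w a"
  by (metis append_take_drop_id count_list_append le_add1)

lemma occs_nth_count:
  assumes "q < length w" "w ! q = a"
  shows "occs w a ! count_list (take q w) a = q"
proof -
  have w: "w = take q w @ (a # drop (Suc q) w)" by (rule id_take_nth_drop[OF assms(1), unfolded assms(2)])
  note oa = occs_append[of "take q w" "a # drop (Suc q) w" a, folded w]
  have len: "length (take q w) = q" using assms by simp
  have e: "occs w a = occs (take q w) a @ map ((+) q) (0 # map Suc (occs (drop (Suc q) w) a))"
    by (simp only: oa len occs_Cons_same)
  show ?thesis unfolding e by (simp add: nth_append length_occs)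
qed

lemma nth_occ_count:
  assumes "q < length w" "w ! q = a"
  shows "nth_occ w a (Suc (count_list (take q w) a)) = q"
  using occs_nth_count[OF assms] by (simp add: nth_occ_occs)

lemma nth_occ_props:
  assumes "1 \<le> s" "s \<le> count_list w a"
  shows "nth_occ w a s < length w" "w ! nth_occ w a s = a"
    "count_list (take (nth_occ w a s) w) a = s - 1"
proof -
  have i: "s - 1 < length (occs w a)" using assms by (simp add: length_occs)
  have mem: "nth_occ w a s \<in> set (occs w a)" unfolding nth_occ_occs using i by simp
  then show q1: "nth_occ w a s < length w" and q2: "w ! nth_occ w a s = a" by (auto simp: set_occs)
  let ?q = "nth_occ w a s"
  have c: "count_list (take ?q w) a < length (occs w a)"
    using count_take_less[OF q1 q2] by (simp add: length_occs)
  have "occs w a ! count_list (take ?q w) a = occs w a ! (s - 1)"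
    using occs_nth_count[OF q1 q2] by (simp add: nth_occ_occs)
  then show "count_list (take ?q w) a = s - 1"
    using nth_eq_iff_index_eq[OF distinct_occs c i] by simp
qed

lemma le_nth_occ_iff:
  assumes "1 \<le> s" "s \<le> count_list w a" "q < length w" "w ! q = a"
  shows "q \<le> nth_occ w a s \<longleftrightarrow> count_list (take q w) a < s"
proof -
  let ?c = "count_list (take q w) a"
  have c: "?c < length (occs w a)" using count_take_less[OF assms(3,4)] by (simp add: length_occs)
  have i: "s - 1 < length (occs w a)" using assms by (simp add: length_occs)
  have q: "q = occs w a ! ?c" using occs_nth_count[OF assms(3,4)] by simp
  have n: "nth_occ w a s = occs w a ! (s - 1)" by (simp add: nth_occ_occs)
  show ?thesis
  proof
    assume "q \<le> nth_occ w a s"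
    show "?c < s"
    proof (rule ccontr)
      assume "\<not> ?c < s"
      then have "s - 1 < ?c" using assms by linarith
      then have "occs w a ! (s - 1) < occs w a ! ?c"
        using sorted_wrt_nth_less[OF sorted_occs[of w a] _ c] by blast
      then show False using \<open>q \<le> nth_occ w a s\<close> q n by simp
    qed
  next
    assume "?c < s"
    then have "?c \<le> s - 1" by linarith
    then show "q \<le> nth_occ w a s"
    proof (cases "?c = s - 1")
      case True then show ?thesis using q n by simp
    next
      case False
      then have "?c < s - 1" using \<open>?c \<le> s - 1\<close> by simp
      then have "occs w a ! ?c < occs w a ! (s - 1)"
        using sorted_wrt_nth_less[OF sorted_occs[of w a] _ i] by blast
      then show ?thesis using q n by simp
    qed
  qed
qed

definition pcount :: "'a \<Rightarrow> 'a \<Rightarrow> 'a list \<Rightarrow> nat \<Rightarrow> nat" where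
  "pcount i j w r = card {p. p < length w \<and> w ! p = j \<and> count_list (take p w) i = r}"

lemma pi_star_pcount: "pi_star i j w r = pcount i j w r"
proof -
  let ?A = "{s \<in> {1..count_list w j}. pi_ij i j w s = r}"
  let ?B = "{p. p < length w \<and> w ! p = j \<and> count_list (take p w) i = r}"
  have inj: "inj_on (nth_occ w j) {1..count_list w j}"
  proof
    fix s t assume s: "s \<in> {1..count_list w j}" and t: "t \<in> {1..count_list w j}"
      and e: "nth_occ w j s = nth_occ w j t"
    have "s - 1 = t - 1"
      using nth_occ_props(3)[of s w j] nth_occ_props(3)[of t w j] s t e by auto
    then show "s = t" using s t by auto
  qed
  have "nth_occ w j ` ?A = ?B"
  proof
    show "nth_occ w j ` ?A \<subseteq> ?B"
    proof
      fix p assume "p \<in> nth_occ w j ` ?A"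
      then obtain s where s: "s \<in> ?A" and ps: "p = nth_occ w j s" by blast
      have s1: "1 \<le> s" "s \<le> count_list w j" using s by auto
      have "pi_ij i j w s = r" using s by simp
      then have "count_list (take p w) i = r" unfolding pi_ij_def ps .
      then show "p \<in> ?B" using nth_occ_props(1,2)[OF s1] ps by blast
    qed
  next
    show "?B \<subseteq> nth_occ w j ` ?A"
    proof
      fix p assume p: "p \<in> ?B"
      let ?s = "Suc (count_list (take p w) j)"
      have s1: "?s \<le> count_list w j" using count_take_less[of p w j] p by auto
      have s2: "nth_occ w j ?s = p" using nth_occ_count[of p w j] p by auto
      have "pi_ij i j w ?s = r" unfolding pi_ij_def s2 using p by simp
      then have sA: "?s \<in> ?A" using s1 by simp
      show "p \<in> nth_occ w j ` ?A" by (rule rev_image_eqI[of ?s ?A p "nth_occ w j", OF sA s2[symmetric]])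
    qed
  qed
  moreover have "inj_on (nth_occ w j) ?A" using inj by (rule inj_on_subset) auto
  ultimately have "card ?B = card ?A" using card_image by fastforce
  then show ?thesis by (simp add: pi_star_def pcount_def)
qed

lemma pcount_snoc:
  "pcount i j (w @ [x]) r = pcount i j w r + (if x = j \<and> count_list w i = r then 1 else 0)"
proof -
  let ?B = "{p. p < length w \<and> w ! p = j \<and> count_list (take p w) i = r}"
  have e: "{p. p < length (w @ [x]) \<and> (w @ [x]) ! p = j \<and> count_list (take p (w @ [x])) i = r}
      = ?B \<union> (if x = j \<and> count_list w i = r then {length w} else {})"
    by (auto simp: nth_append less_Suc_eq)
  have f: "finite ?B" by (rule finite_subset[of _ "{..<length w}"]) auto
  show ?thesis unfolding pcount_def e using f by (auto simp: card_insert_if)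
qed

lemma pcount_Nil[simp]: "pcount i j [] r = 0"
  by (simp add: pcount_def)

lemma pcount_Cons:
  assumes "i \<noteq> j"
  shows "pcount i j (x # w) r = (if x = j \<and> r = 0 then 1 else 0) +
     (if x = i then (if r = 0 then 0 else pcount i j w (r - 1)) else pcount i j w r)"
proof -
  let ?B = "\<lambda>r. {p. p < length w \<and> w ! p = j \<and> count_list (take p w) i = r}"
  have e: "{p. p < length (x # w) \<and> (x # w) ! p = j \<and> count_list (take p (x # w)) i = r}
      = (if x = j \<and> r = 0 then {0} else {}) \<union>
        Suc ` (if x = i then (if r = 0 then {} else ?B (r - 1)) else ?B r)"
  proof (intro set_eqI iffI)
    fix p assume "p \<in> {p. p < length (x # w) \<and> (x # w) ! p = j \<and> count_list (take p (x # w)) i = r}"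
    then show "p \<in> (if x = j \<and> r = 0 then {0} else {}) \<union>
        Suc ` (if x = i then (if r = 0 then {} else ?B (r - 1)) else ?B r)"
      using assms by (cases p) (auto split: if_splits)
  next
    fix p assume "p \<in> (if x = j \<and> r = 0 then {0} else {}) \<union>
        Suc ` (if x = i then (if r = 0 then {} else ?B (r - 1)) else ?B r)"
    then show "p \<in> {p. p < length (x # w) \<and> (x # w) ! p = j \<and> count_list (take p (x # w)) i = r}"
      using assms by (auto split: if_splits)
  qed
  have f: "finite (?B r')" for r' by (rule finite_subset[of _ "{..<length w}"]) auto
  let ?C = "(if x = i then (if r = 0 then {} else ?B (r - 1)) else ?B r)"
  have fC: "finite ?C" using f by simp
  have "card ((if x = j \<and> r = 0 then {0} else {}) \<union> Suc ` ?C) =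
     card (if x = j \<and> r = 0 then {0::nat} else {}) + card (Suc ` ?C)"
    by (rule card_Un_disjoint) (use fC in auto)
  also have "card (Suc ` ?C) = card ?C" by (rule card_image) simp
  finally have fin: "card ((if x = j \<and> r = 0 then {0} else {}) \<union> Suc ` ?C) =
     card (if x = j \<and> r = 0 then {0::nat} else {}) + card ?C" .
  have c0: "card (if x = j \<and> r = 0 then {0::nat} else {}) = (if x = j \<and> r = 0 then 1 else 0)" by simp
  have cC: "card ?C = (if x = i then (if r = 0 then 0 else card (?B (r-1))) else card (?B r))" by simp
  show ?thesis unfolding pcount_def e fin c0 cC ..
qed

lemma pcount_big:
  assumes "count_list w i < r" shows "pcount i j w r = 0"
proof -
  have "\<not> (count_list (take p w) i = r)" for p using count_take_le[of p w i] assms by simp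
  then have "{p. p < length w \<and> w ! p = j \<and> count_list (take p w) i = r} = {}"
    by blast
  then show ?thesis by (simp add: pcount_def)
qed


fun cnt :: "nat \<Rightarrow> nat list \<Rightarrow> bool list \<Rightarrow> nat" where
  "cnt d [] P = (if True \<in> set P then 0 else 1)"
| "cnt d (x # w) [] = (if d \<in> set (x # w) then 0 else 1)"
| "cnt d (x # w) (True # P) = (if x = d then cnt d w P else cnt d w (True # P))"
| "cnt d (x # w) (False # P) = (if x = d then cnt d (x # w) P else cnt d w (False # P) + cnt d (x # w) P)"

definition asum :: "nat \<Rightarrow> nat list \<Rightarrow> nat \<Rightarrow> nat" where
  "asum d w r = (\<Sum>l=1..d-1. pcount d l w r)"

lemma asum_Nil[simp]: "asum d [] r = 0" by (simp add: asum_def)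

lemma asum_Cons:
  assumes "x \<in> {1..d}"
  shows "asum d (x # w) r = (if x \<noteq> d \<and> r = 0 then 1 else 0) +
     (if x = d then (if r = 0 then 0 else asum d w (r - 1)) else asum d w r)"
proof (cases "x = d")
  case True
  have "pcount d l (x # w) r = (if r = 0 then 0 else pcount d l w (r - 1))" if "l \<in> {1..d-1}" for l
    using pcount_Cons[of d l x w r] that True by auto
  then have "asum d (x # w) r = (\<Sum>l=1..d-1. (if r = 0 then 0 else pcount d l w (r - 1)))"
    unfolding asum_def by (rule sum.cong[OF refl])
  then show ?thesis using True by (auto simp: asum_def)
next
  case False
  have "pcount d l (x # w) r = (if x = l \<and> r = 0 then 1 else 0) + pcount d l w r" if "l \<in> {1..d-1}" for l
    using pcount_Cons[of d l x w r] that False by auto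
  then have "asum d (x # w) r = (\<Sum>l=1..d-1. (if x = l \<and> r = 0 then 1 else 0) + pcount d l w r)"
    unfolding asum_def by (rule sum.cong[OF refl])
  also have "\<dots> = (\<Sum>l=1..d-1. (if x = l \<and> r = 0 then 1 else 0)) + asum d w r"
    by (simp add: sum.distrib asum_def)
  also have "(\<Sum>l=1..d-1. (if x = l \<and> r = 0 then 1 else 0)) = (if r = 0 then 1 else (0::nat))"
  proof -
    have "(\<Sum>l=1..d-1. (if x = l \<and> r = 0 then 1 else 0)) = (\<Sum>l\<in>{1..d-1}. (if x = l then (if r = 0 then 1 else 0) else (0::nat)))"
      by (rule sum.cong) auto
    also have "\<dots> = (if r = 0 then 1 else 0)" using assms False by (subst sum.delta') auto
    finally show ?thesis .
  qed
  finally show ?thesis using False by simp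
qed

abbreviation bP :: "bool list \<Rightarrow> nat \<Rightarrow> nat" where
  "bP P r \<equiv> pcount True False P r"

lemma bP_Cons: "bP (c # P) r = (if c = False \<and> r = 0 then 1 else 0) +
   (if c then (if r = 0 then 0 else bP P (r - 1)) else bP P r)"
  using pcount_Cons[of True False c P r] by simp

definition Phi :: "nat \<Rightarrow> nat list \<Rightarrow> bool list \<Rightarrow> nat" where
  "Phi d w P = (\<Prod>r=0..count_list w d. (bP P r + asum d w r) choose bP P r)"

lemma prod_shift0: "(\<Prod>r=0..c. f r) = f 0 * (\<Prod>r<c. f (Suc r))" for f :: "nat \<Rightarrow> nat"
proof -
  have "(\<Prod>r=0..c. f r) = (\<Prod>r<Suc c. f r)" by (rule prod.cong) auto
  also have "\<dots> = f 0 * (\<Prod>r<c. f (Suc r))" by (rule prod.lessThan_Suc_shift)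
  finally show ?thesis .
qed


lemma Phi_alt: "Phi d w P = (\<Prod>r<Suc (count_list w d). (bP P r + asum d w r) choose bP P r)"
  unfolding Phi_def by (rule prod.cong) auto

lemma cnt_Phi:
  "set w \<subseteq> {1..d} \<Longrightarrow> count_list w d = count_list P True \<Longrightarrow> cnt d w P = Phi d w P"
proof (induction d w P rule: cnt.induct)
  case (1 d P)
  show ?case using 1 by (simp add: Phi_def count_list_0_iff)
next
  case (2 d x w)
  then show ?case
    by (simp add: Phi_def pcount_def count_list_0_iff split: if_splits)
next
  case (3 d x w P)
  have x: "x \<in> {1..d}" using 3 by simp
  show ?case
  proof (cases "x = d")
    case True
    have IH: "cnt d w P = Phi d w P" using 3 True by simp
    have "Phi d (x # w) (True # P) = (\<Prod>r<Suc (Suc (count_list w d)). (bP (True # P) r + asum d (x # w) r) choose bP (True # P) r)"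
      unfolding Phi_alt using True by simp
    also have "\<dots> = ((bP (True # P) 0 + asum d (x # w) 0) choose bP (True # P) 0) *
        (\<Prod>r<Suc (count_list w d). (bP (True # P) (Suc r) + asum d (x # w) (Suc r)) choose bP (True # P) (Suc r))"
      by (rule prod.lessThan_Suc_shift)
    also have "\<dots> = Phi d w P" unfolding Phi_alt using True x by (simp add: bP_Cons asum_Cons)
    finally show ?thesis using IH True by simp
  next
    case False
    have IH: "cnt d w (True # P) = Phi d w (True # P)" using 3 False by simp
    have "Phi d (x # w) (True # P) = Phi d w (True # P)"
      unfolding Phi_alt using False x
      by (intro prod.cong) (auto simp: bP_Cons asum_Cons)
    then show ?thesis using IH False by simp
  qed
next
  case (4 d x w P)
  have x: "x \<in> {1..d}" using 4 by simp
  show ?case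
  proof (cases "x = d")
    case True
    have IH: "cnt d (x # w) P = Phi d (x # w) P" using 4 True by simp
    have "Phi d (x # w) (False # P) = Phi d (x # w) P"
      unfolding Phi_alt using True x
      by (intro prod.cong) (auto simp: bP_Cons asum_Cons)
    then show ?thesis using IH True by simp
  next
    case False
    have IH1: "cnt d w (False # P) = Phi d w (False # P)" using 4 False by simp
    have IH2: "cnt d (x # w) P = Phi d (x # w) P" using 4 False by simp
    let ?c = "count_list w d"
    let ?G = "\<Prod>r<?c. (bP P (Suc r) + asum d w (Suc r)) choose bP P (Suc r)"
    have c1: "count_list (x # w) d = ?c" using False by simp
    have G1: "(\<Prod>r<?c. (bP (False # P) (Suc r) + asum d (x # w) (Suc r)) choose bP (False # P) (Suc r)) = ?G"
      using False x by (intro prod.cong) (auto simp: bP_Cons asum_Cons)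
    have G2: "(\<Prod>r<?c. (bP (False # P) (Suc r) + asum d w (Suc r)) choose bP (False # P) (Suc r)) = ?G"
      by (intro prod.cong) (auto simp: bP_Cons)
    have G3: "(\<Prod>r<?c. (bP P (Suc r) + asum d (x # w) (Suc r)) choose bP P (Suc r)) = ?G"
      using False x by (intro prod.cong) (auto simp: asum_Cons)
    have e0: "Phi d (x # w) (False # P) = ((bP P 0 + 1) + (asum d w 0 + 1) choose (bP P 0 + 1)) * ?G"
      unfolding Phi_alt c1 prod.lessThan_Suc_shift G1 using False x by (simp add: bP_Cons asum_Cons)
    have e1: "Phi d w (False # P) = ((bP P 0 + 1) + asum d w 0 choose (bP P 0 + 1)) * ?G"
      unfolding Phi_alt prod.lessThan_Suc_shift G2 by (simp add: bP_Cons)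
    have e2: "Phi d (x # w) P = (bP P 0 + (asum d w 0 + 1) choose bP P 0) * ?G"
      unfolding Phi_alt c1 prod.lessThan_Suc_shift G3 using False x by (simp add: asum_Cons)
    have pas: "((bP P 0 + 1) + (asum d w 0 + 1) choose (bP P 0 + 1)) =
       ((bP P 0 + 1) + asum d w 0 choose (bP P 0 + 1)) + (bP P 0 + (asum d w 0 + 1) choose bP P 0)"
      by (simp add: add_ac)
    show ?thesis using IH1 IH2 False e0 e1 e2 pas by (simp add: distrib_right)
  qed
qed


definition fib :: "nat \<Rightarrow> nat list \<Rightarrow> bool list \<Rightarrow> nat list set" where
  "fib d w P = {W. set W \<subseteq> {1..Suc d} \<and> filter (\<lambda>x. x \<noteq> Suc d) W = w \<and>
      map (\<lambda>x. x = d) (filter (\<lambda>x. x = d \<or> x = Suc d) W) = P}"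

lemma fib_Nil: "fib d [] P = (if True \<in> set P then {} else {replicate (length P) (Suc d)})"
proof (cases "True \<in> set P")
  case True
  have "W \<notin> fib d [] P" for W
  proof
    assume W: "W \<in> fib d [] P"
    then have "\<forall>x\<in>set W. x = Suc d" by (auto simp: fib_def filter_empty_conv)
    then have "filter (\<lambda>x. x = d \<or> x = Suc d) W = W" by (auto intro: filter_True)
    then have "map (\<lambda>x. x = d) W = P" using W by (simp add: fib_def)
    then have "True \<in> set (map (\<lambda>x. x = d) W)" using True by simp
    then obtain y where "y \<in> set W" "y = d" by auto
    then show False using \<open>\<forall>x\<in>set W. x = Suc d\<close> by auto
  qed
  then show ?thesis using True by auto
next
  case False
  have "fib d [] P = {replicate (length P) (Suc d)}"
  proof (intro set_eqI iffI)
    fix W assume W: "W \<in> fib d [] P"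
    then have a: "\<forall>x\<in>set W. x = Suc d" by (auto simp: fib_def filter_empty_conv)
    then have "filter (\<lambda>x. x = d \<or> x = Suc d) W = W" by (auto intro: filter_True)
    then have "map (\<lambda>x. x = d) W = P" using W by (simp add: fib_def)
    then have "length W = length P" by auto
    then show "W \<in> {replicate (length P) (Suc d)}" using a replicate_length_same[OF a] by auto
  next
    fix W assume "W \<in> {replicate (length P) (Suc d)}"
    have "\<forall>y\<in>set P. y = False" using False by auto
    then have P: "replicate (length P) False = P" by (rule replicate_length_same)
    then show "W \<in> fib d [] P" using \<open>W \<in> _\<close>
      by (auto simp: fib_def filter_empty_conv)
  qed
  then show ?thesis using False by simp
qed

lemma fib_Nil2:
  assumes "set w \<subseteq> {1..d}"
  shows "fib d w [] = (if d \<in> set w then {} else {w})"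
proof (intro set_eqI iffI)
  fix W assume W: "W \<in> fib d w []"
  then have a: "\<forall>x\<in>set W. x \<noteq> d \<and> x \<noteq> Suc d" by (auto simp: fib_def filter_empty_conv)
  then have "filter (\<lambda>x. x \<noteq> Suc d) W = W" by (auto intro: filter_True)
  then have "W = w" using W by (simp add: fib_def)
  then show "W \<in> (if d \<in> set w then {} else {w})" using a by auto
next
  fix W assume "W \<in> (if d \<in> set w then {} else {w})"
  then show "W \<in> fib d w []" using assms
    by (auto simp: fib_def filter_empty_conv split: if_splits intro!: filter_True)
qed

lemma fib_Cons_True:
  assumes "x \<in> {1..d}"
  shows "fib d (x # w) (True # P) = (Cons x) ` (if x = d then fib d w P else fib d w (True # P))"
proof (intro set_eqI iffI)
  fix W assume W: "W \<in> fib d (x # w) (True # P)"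
  show "W \<in> (Cons x) ` (if x = d then fib d w P else fib d w (True # P))"
  proof (cases W)
    case Nil then show ?thesis using W by (simp add: fib_def)
  next
    case (Cons y W')
    then show ?thesis using W assms by (auto simp: fib_def subset_iff split: if_splits)
  qed
next
  fix W assume "W \<in> (Cons x) ` (if x = d then fib d w P else fib d w (True # P))"
  then show "W \<in> fib d (x # w) (True # P)" using assms
    by (auto simp: fib_def subset_iff split: if_splits)
qed

lemma fib_Cons_False:
  assumes "x \<in> {1..d}"
  shows "fib d (x # w) (False # P) = (Cons (Suc d)) ` fib d (x # w) P \<union>
     (if x = d then {} else (Cons x) ` fib d w (False # P))"
proof (intro set_eqI iffI)
  fix W assume W: "W \<in> fib d (x # w) (False # P)"
  show "W \<in> (Cons (Suc d)) ` fib d (x # w) P \<union> (if x = d then {} else (Cons x) ` fib d w (False # P))"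
  proof (cases W)
    case Nil then show ?thesis using W by (simp add: fib_def)
  next
    case (Cons y W')
    then show ?thesis using W assms by (auto simp: fib_def subset_iff split: if_splits)
  qed
next
  fix W assume "W \<in> (Cons (Suc d)) ` fib d (x # w) P \<union> (if x = d then {} else (Cons x) ` fib d w (False # P))"
  then show "W \<in> fib d (x # w) (False # P)" using assms
    by (auto simp: fib_def subset_iff split: if_splits)
qed

lemma fib_card:
  "set w \<subseteq> {1..d} \<Longrightarrow> finite (fib d w P) \<and> card (fib d w P) = cnt d w P"
proof (induction d w P rule: cnt.induct)
  case (1 d P) then show ?case by (simp add: fib_Nil)
next
  case (2 d x w) then show ?case by (simp add: fib_Nil2[OF "2.prems"] del: fib_Nil)
next
  case (3 d x w P)
  have x: "x \<in> {1..d}" using 3 by simp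
  show ?case
  proof (cases "x = d")
    case True
    then have IH: "finite (fib d w P) \<and> card (fib d w P) = cnt d w P" using 3 by simp
    then show ?thesis unfolding fib_Cons_True[OF x] using True by (simp add: card_image)
  next
    case False
    then have IH: "finite (fib d w (True # P)) \<and> card (fib d w (True # P)) = cnt d w (True # P)" using 3 by simp
    then show ?thesis unfolding fib_Cons_True[OF x] using False by (simp add: card_image)
  qed
next
  case (4 d x w P)
  have x: "x \<in> {1..d}" using 4 by simp
  show ?case
  proof (cases "x = d")
    case True
    then have IH: "finite (fib d (x # w) P) \<and> card (fib d (x # w) P) = cnt d (x # w) P" using 4 by simp
    then show ?thesis unfolding fib_Cons_False[OF x] using True by (simp add: card_image)
  next
    case False
    then have IH1: "finite (fib d (x # w) P) \<and> card (fib d (x # w) P) = cnt d (x # w) P"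
      and IH2: "finite (fib d w (False # P)) \<and> card (fib d w (False # P)) = cnt d w (False # P)"
      using 4 by simp_all
    have d: "Suc d \<noteq> x" using x by simp
    have "card (Cons (Suc d) ` fib d (x # w) P \<union> Cons x ` fib d w (False # P)) =
        card (Cons (Suc d) ` fib d (x # w) P) + card (Cons x ` fib d w (False # P))"
      by (rule card_Un_disjoint) (use IH1 IH2 d in auto)
    then show ?thesis unfolding fib_Cons_False[OF x] using False IH1 IH2 by (simp add: card_image)
  qed
qed


definition chains :: "nat \<Rightarrow> nat list \<Rightarrow> (nat \<Rightarrow> nat) set" where
  "chains j W = {p \<in> {1..j} \<rightarrow>\<^sub>E {..<length W}. (\<forall>i\<in>{1..j}. W ! (p i) = i) \<and> (\<forall>i\<in>{1..<j}. p i < p (Suc i))}"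

definition pat :: "nat \<Rightarrow> nat list \<Rightarrow> nat" where
  "pat j W = card (chains j W)"

lemma finite_chains: "finite (chains j W)"
  by (rule finite_subset[of _ "{1..j} \<rightarrow>\<^sub>E {..<length W}"]) (auto simp: chains_def intro: finite_PiE)

lemma chains_mono:
  assumes "p \<in> chains j W" "1 \<le> i" "i < i'" "i' \<le> j"
  shows "p i < p i'"
  using assms(3,4)
proof (induction i' rule: less_induct)
  case (less i')
  obtain i'' where i'': "i' = Suc i''" using less.prems by (cases i') auto
  have step: "p i'' < p i'" using assms(1,2) less.prems i'' unfolding chains_def by auto
  show ?case
  proof (cases "i = i''")
    case True then show ?thesis using step by simp
  next
    case False
    then have "p i < p i''" using less.IH[of i''] less.prems i'' by auto
    then show ?thesis using step by simp
  qed
qed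

lemma chains_0: "chains 0 W = {\<lambda>_. undefined}"
  by (auto simp: chains_def PiE_def extensional_def)

lemma pat_0: "pat 0 W = 1" by (simp add: pat_def chains_0)

lemma chains_snoc:
  assumes "1 \<le> j"
  shows "chains j (W @ [x]) = chains j W \<union> (if x = j then (\<lambda>p. p(j := length W)) ` chains (j - 1) W else {})"
proof (intro set_eqI iffI)
  fix q assume q: "q \<in> chains j (W @ [x])"
  have qj: "q j < Suc (length W)" using q assms unfolding chains_def by auto
  show "q \<in> chains j W \<union> (if x = j then (\<lambda>p. p(j := length W)) ` chains (j - 1) W else {})"
  proof (cases "q j < length W")
    case True
    have le: "q i \<le> q j" if "i \<in> {1..j}" for i
      using chains_mono[OF q, of i j] that by (cases "i = j") auto
    have lt: "q i < length W" if "i \<in> {1..j}" for i using le[OF that] True by simp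
    have "q \<in> chains j W"
      unfolding chains_def
    proof (intro CollectI conjI ballI)
      show "q \<in> {1..j} \<rightarrow>\<^sub>E {..<length W}" using q lt unfolding chains_def by (auto simp: PiE_def Pi_def)
    next
      fix i assume i: "i \<in> {1..j}"
      then have "(W @ [x]) ! q i = i" using q unfolding chains_def by auto
      then show "W ! q i = i" using lt[OF i] by (simp add: nth_append)
    next
      fix i assume i: "i \<in> {1..<j}"
      then show "q i < q (Suc i)" using q unfolding chains_def by auto
    qed
    then show ?thesis by simp
  next
    case False
    then have qj': "q j = length W" using qj by simp
    have "(W @ [x]) ! (q j) = j" using q assms unfolding chains_def by auto
    then have xj: "x = j" using qj' by simp
    let ?p = "q(j := undefined)"
    have lt: "q i < length W" if "i \<in> {1..j-1}" for i
      using chains_mono[OF q, of i j] that qj' by auto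
    have "?p \<in> chains (j - 1) W"
      unfolding chains_def
    proof (intro CollectI conjI ballI)
      show "?p \<in> {1..j-1} \<rightarrow>\<^sub>E {..<length W}" using q lt unfolding chains_def
        by (auto simp: PiE_def Pi_def extensional_def)
    next
      fix i assume i: "i \<in> {1..j-1}"
      then have "(W @ [x]) ! q i = i" using q unfolding chains_def by auto
      moreover have "i \<noteq> j" using i assms by auto
      ultimately show "W ! ?p i = i" using lt[OF i] by (simp add: nth_append)
    next
      fix i assume i: "i \<in> {1..<j-1}"
      then show "?p i < ?p (Suc i)" using q unfolding chains_def by auto
    qed
    moreover have "q = ?p(j := length W)" using qj' by auto
    ultimately have "q \<in> (\<lambda>p. p(j := length W)) ` chains (j - 1) W"
      by (rule rev_image_eqI[of ?p _ q "\<lambda>p. p(j := length W)"])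
    then show ?thesis using xj by simp
  qed
next
  fix q assume q: "q \<in> chains j W \<union> (if x = j then (\<lambda>p. p(j := length W)) ` chains (j - 1) W else {})"
  show "q \<in> chains j (W @ [x])"
  proof (cases "q \<in> chains j W")
    case True then show ?thesis unfolding chains_def by (auto simp: PiE_def Pi_def nth_append)
  next
    case False
    then obtain p where xj: "x = j" and p: "p \<in> chains (j - 1) W" and qp: "q = p(j := length W)"
      using q by (auto split: if_splits)
    have pj: "p j = undefined" using p assms unfolding chains_def by (auto simp: PiE_def extensional_def)
    show ?thesis
      unfolding chains_def qp
    proof (intro CollectI conjI ballI)
      show "p(j := length W) \<in> {1..j} \<rightarrow>\<^sub>E {..<length (W @ [x])}"
        using p assms unfolding chains_def by (auto simp: PiE_def Pi_def extensional_def)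
    next
      fix i assume "i \<in> {1..j}"
      then show "(W @ [x]) ! (p(j := length W)) i = i"
        using p xj unfolding chains_def by (cases "i = j") (auto simp: nth_append PiE_def Pi_def)
    next
      fix i assume i: "i \<in> {1..<j}"
      show "(p(j := length W)) i < (p(j := length W)) (Suc i)"
      proof (cases "Suc i = j")
        case True then show ?thesis using p i unfolding chains_def by (auto simp: PiE_def Pi_def)
      next
        case False then show ?thesis using p i unfolding chains_def by auto
      qed
    qed
  qed
qed

lemma pat_snoc:
  assumes "1 \<le> j"
  shows "pat j (W @ [x]) = pat j W + (if x = j then pat (j - 1) W else 0)"
proof -
  have inj: "inj_on (\<lambda>p. p(j := length W)) (chains (j - 1) W)"
  proof
    fix p p' assume p: "p \<in> chains (j - 1) W" and p': "p' \<in> chains (j - 1) W"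
      and e: "p(j := length W) = p'(j := length W)"
    have "p j = undefined" "p' j = undefined"
      using p p' assms unfolding chains_def by (auto simp: PiE_def extensional_def)
    then show "p = p'" using e by (metis fun_upd_triv fun_upd_upd)
  qed
  have disj: "chains j W \<inter> (\<lambda>p. p(j := length W)) ` chains (j - 1) W = {}"
    using assms unfolding chains_def by (auto simp: PiE_def Pi_def)
  show ?thesis
  proof (cases "x = j")
    case True
    have "pat j (W @ [x]) = card (chains j W) + card ((\<lambda>p. p(j := length W)) ` chains (j - 1) W)"
      unfolding pat_def chains_snoc[OF assms] using True disj
      by (simp add: card_Un_disjoint finite_chains)
    then show ?thesis using True inj by (simp add: card_image pat_def)
  next
    case False then show ?thesis unfolding pat_def chains_snoc[OF assms] by simp
  qed
qed

lemma pat_Nil: "1 \<le> j \<Longrightarrow> pat j [] = 0"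
  by (auto simp: pat_def chains_def PiE_def Pi_def)

lemma pat_filter:
  "j \<le> d \<Longrightarrow> pat j (filter (\<lambda>x. x \<noteq> Suc d) W) = pat j W"
proof (induction W arbitrary: j rule: rev_induct)
  case Nil then show ?case by simp
next
  case (snoc x W)
  show ?case
  proof (cases "j = 0")
    case True then show ?thesis by (simp add: pat_0)
  next
    case False
    then have j: "1 \<le> j" by simp
    show ?thesis
    proof (cases "x = Suc d")
      case True then show ?thesis using snoc j by (simp add: pat_snoc)
    next
      case False
      have "pat j (filter (\<lambda>x. x \<noteq> Suc d) (W @ [x])) = pat j (filter (\<lambda>x. x \<noteq> Suc d) W @ [x])"
        using False by simp
      also have "\<dots> = pat j W + (if x = j then pat (j - 1) W else 0)"
        using snoc j by (simp add: pat_snoc)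
      also have "\<dots> = pat j (W @ [x])" using j by (simp add: pat_snoc)
      finally show ?thesis .
    qed
  qed
qed

lemma S_count_chains: "S_count d w t = card {p \<in> chains d w. 1 \<le> t \<and> p d \<le> nth_occ w d t}"
  unfolding S_count_def chains_def by (rule arg_cong[where f=card]) auto

lemma S_zero: "S_count d w 0 = 0"
  unfolding S_count_chains by simp

lemma S_snoc:
  assumes d: "1 \<le> d" and t: "1 \<le> t" "t \<le> count_list w d"
  shows "S_count d (w @ [x]) t = S_count d w t"
proof -
  have tl: "t - 1 < length (occs w d)" using t by (simp add: length_occs)
  have n: "nth_occ (w @ [x]) d t = nth_occ w d t"
    unfolding nth_occ_occs occs_snoc using tl by (simp add: nth_append)
  have lt: "nth_occ w d t < length w" using nth_occ_props(1)[OF t] .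
  have "{p \<in> chains d (w @ [x]). 1 \<le> t \<and> p d \<le> nth_occ w d t} = {p \<in> chains d w. 1 \<le> t \<and> p d \<le> nth_occ w d t}"
    unfolding chains_snoc[OF d] using lt by auto
  then show ?thesis unfolding S_count_chains n by simp
qed

lemma S_full:
  assumes d: "1 \<le> d"
  shows "S_count d w (count_list w d) = pat d w"
proof (cases "count_list w d = 0")
  case True
  have "chains d w = {}"
  proof (rule ccontr)
    assume "chains d w \<noteq> {}"
    then obtain p where p: "p \<in> chains d w" by blast
    then have "p d < length w" "w ! p d = d" using d unfolding chains_def by (auto simp: PiE_def Pi_def)
    then have "d \<in> set w" by (metis nth_mem)
    then show False using True by (simp add: count_list_0_iff)
  qed
  then show ?thesis using True by (simp add: S_zero pat_def)
next
  case False
  have "{p \<in> chains d w. 1 \<le> count_list w d \<and> p d \<le> nth_occ w d (count_list w d)} = chains d w"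
  proof (intro set_eqI iffI)
    fix p assume p: "p \<in> chains d w"
    then have pl: "p d < length w" and pw: "w ! p d = d" using d unfolding chains_def by (auto simp: PiE_def Pi_def)
    have "p d \<le> nth_occ w d (count_list w d)"
      using le_nth_occ_iff[of "count_list w d" w d "p d"] False pl pw count_take_less[OF pl pw] by simp
    then show "p \<in> {p \<in> chains d w. 1 \<le> count_list w d \<and> p d \<le> nth_occ w d (count_list w d)}"
      using p False by simp
  qed simp
  then show ?thesis unfolding S_count_chains pat_def by simp
qed

definition wf :: "nat \<Rightarrow> nat list \<Rightarrow> nat list" where
  "wf d W = filter (\<lambda>x. x \<noteq> Suc d) W"

definition Pf :: "nat \<Rightarrow> nat list \<Rightarrow> bool list" where
  "Pf d W = map (\<lambda>x. x = d) (filter (\<lambda>x. x = d \<or> x = Suc d) W)"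

lemma count_wf: "count_list (wf d W) i = (if i = Suc d then 0 else count_list W i)"
  unfolding wf_def by (induction W) auto

lemma count_Pf_True: "count_list (Pf d W) True = count_list W d"
  unfolding Pf_def by (induction W) auto

lemma count_Pf_False: "count_list (Pf d W) False = count_list W (Suc d)"
  unfolding Pf_def by (induction W) auto

lemma decomp:
  assumes d: "1 \<le> d"
  shows "set W \<subseteq> {1..Suc d} \<Longrightarrow>
    pat (Suc d) W = (\<Sum>r=0..count_list W d. S_count d (wf d W) r * bP (Pf d W) r)"
proof (induction W rule: rev_induct)
  case Nil then show ?case by (simp add: pat_Nil S_zero wf_def)
next
  case (snoc x W)
  have IH: "pat (Suc d) W = (\<Sum>r=0..count_list W d. S_count d (wf d W) r * bP (Pf d W) r)"
    using snoc by simp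
  have x: "x \<in> {1..Suc d}" using snoc.prems by simp
  let ?c = "count_list W d"
  have cw: "count_list (wf d W) d = ?c" by (simp add: count_wf)
  have cP: "count_list (Pf d W) True = ?c" by (simp add: count_Pf_True)
  consider "x = Suc d" | "x = d" | "x \<noteq> d" "x \<noteq> Suc d" by blast
  then show ?case
  proof cases
    case 1
    have w': "wf d (W @ [x]) = wf d W" using 1 by (simp add: wf_def)
    have P': "Pf d (W @ [x]) = Pf d W @ [False]" using 1 by (simp add: Pf_def)
    have c': "count_list (W @ [x]) d = ?c" using 1 by simp
    have A: "pat (Suc d) (W @ [x]) = pat (Suc d) W + pat d W" using 1 by (simp add: pat_snoc)
    have B: "pat d W = S_count d (wf d W) ?c"
      using pat_filter[of d d W] S_full[OF d, of "wf d W"] cw by (simp add: wf_def)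
    have C: "(\<Sum>r=0..?c. S_count d (wf d W) r * bP (Pf d W @ [False]) r) =
        (\<Sum>r=0..?c. S_count d (wf d W) r * bP (Pf d W) r + (if r = ?c then S_count d (wf d W) r else 0))"
      by (intro sum.cong) (auto simp: pcount_snoc cP)
    have D: "(\<Sum>r=0..?c. S_count d (wf d W) r * bP (Pf d W) r + (if r = ?c then S_count d (wf d W) r else 0))
       = (\<Sum>r=0..?c. S_count d (wf d W) r * bP (Pf d W) r) + S_count d (wf d W) ?c"
      by (simp add: sum.distrib)
    show ?thesis using IH w' P' c' A B C D by simp
  next
    case 2
    have w': "wf d (W @ [x]) = wf d W @ [d]" using 2 by (simp add: wf_def)
    have P': "Pf d (W @ [x]) = Pf d W @ [True]" using 2 by (simp add: Pf_def)
    have c': "count_list (W @ [x]) d = Suc ?c" using 2 by simp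
    have "pat (Suc d) (W @ [x]) = pat (Suc d) W" using 2 by (simp add: pat_snoc)
    moreover have "(\<Sum>r=0..Suc ?c. S_count d (wf d W @ [d]) r * bP (Pf d W @ [True]) r) =
        (\<Sum>r=0..?c. S_count d (wf d W @ [d]) r * bP (Pf d W @ [True]) r) +
        S_count d (wf d W @ [d]) (Suc ?c) * bP (Pf d W @ [True]) (Suc ?c)"
      by simp
    moreover have "bP (Pf d W @ [True]) (Suc ?c) = 0"
      using pcount_big[of "Pf d W" True "Suc ?c" False] cP by (simp add: pcount_snoc)
    moreover have "(\<Sum>r=0..?c. S_count d (wf d W @ [d]) r * bP (Pf d W @ [True]) r) =
        (\<Sum>r=0..?c. S_count d (wf d W) r * bP (Pf d W) r)"
    proof (intro sum.cong refl)
      fix r assume r: "r \<in> {0..?c}"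
      have b: "bP (Pf d W @ [True]) r = bP (Pf d W) r" by (simp add: pcount_snoc)
      show "S_count d (wf d W @ [d]) r * bP (Pf d W @ [True]) r = S_count d (wf d W) r * bP (Pf d W) r"
      proof (cases "r = 0")
        case True then show ?thesis by (simp add: S_zero)
      next
        case False then show ?thesis using S_snoc[OF d, of r "wf d W" d] r cw b by simp
      qed
    qed
    ultimately show ?thesis using IH w' P' c' by simp
  next
    case 3
    have w': "wf d (W @ [x]) = wf d W @ [x]" using 3 by (simp add: wf_def)
    have P': "Pf d (W @ [x]) = Pf d W" using 3 by (simp add: Pf_def)
    have c': "count_list (W @ [x]) d = ?c" using 3 by simp
    have "pat (Suc d) (W @ [x]) = pat (Suc d) W" using 3 by (simp add: pat_snoc)
    moreover have "(\<Sum>r=0..?c. S_count d (wf d W @ [x]) r * bP (Pf d W) r) =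
        (\<Sum>r=0..?c. S_count d (wf d W) r * bP (Pf d W) r)"
    proof (intro sum.cong refl)
      fix r assume r: "r \<in> {0..?c}"
      show "S_count d (wf d W @ [x]) r * bP (Pf d W) r = S_count d (wf d W) r * bP (Pf d W) r"
      proof (cases "r = 0")
        case True then show ?thesis by (simp add: S_zero)
      next
        case False then show ?thesis using S_snoc[OF d, of r "wf d W" x] r cw by simp
      qed
    qed
    ultimately show ?thesis using IH w' P' c' by simp
  qed
qed


definition Msum :: "nat \<Rightarrow> (nat \<Rightarrow> nat) \<Rightarrow> nat multiset" where
  "Msum d m = (\<Sum>i\<in>{1..d}. replicate_mset (m i) i)"

lemma count_Msum: "count (Msum d m) x = (if x \<in> {1..d} then m x else 0)"
proof -
  have "count (Msum d m) x = (\<Sum>i\<in>{1..d}. count (replicate_mset (m i) i) x)"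
    unfolding Msum_def by (simp add: count_sum)
  also have "\<dots> = (\<Sum>i\<in>{1..d}. if i = x then m i else 0)"
    by (rule sum.cong) auto
  also have "\<dots> = (if x \<in> {1..d} then m x else 0)" by (simp add: sum.delta')
  finally show ?thesis .
qed

lemma words_perm: "words d m = permutations_of_multiset (Msum d m)"
proof (intro set_eqI iffI)
  fix w assume w: "w \<in> words d m"
  have "count (mset w) x = count (Msum d m) x" for x
  proof (cases "x \<in> {1..d}")
    case True then show ?thesis using w by (simp add: words_def count_Msum count_mset)
  next
    case False
    then have "x \<notin> set w" using w by (auto simp: words_def)
    then show ?thesis using False by (auto simp: count_Msum count_mset count_list_0_iff)
  qed
  then show "w \<in> permutations_of_multiset (Msum d m)"
    by (simp add: permutations_of_multiset_def multiset_eq_iff)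
next
  fix w assume "w \<in> permutations_of_multiset (Msum d m)"
  then have c: "count_list w x = (if x \<in> {1..d} then m x else 0)" for x
    by (simp add: permutations_of_multiset_def count_mset[symmetric] count_Msum)
  have "set w \<subseteq> {1..d}"
  proof
    fix x assume "x \<in> set w"
    then have "count_list w x \<noteq> 0" by (simp add: count_list_0_iff)
    then show "x \<in> {1..d}" using c[of x] by (auto split: if_splits)
  qed
  then show "w \<in> words d m" using c by (simp add: words_def)
qed

lemma finite_words: "finite (words d m)"
  by (simp add: words_perm finite_permutations_of_multiset)

lemma length_bool: "length P = count_list P True + count_list P False"
  by (induction P) auto

lemma finite_words_ab: "finite (words_ab a b)"
proof (rule finite_subset)
  show "words_ab a b \<subseteq> {P. set P \<subseteq> UNIV \<and> length P = a + b}"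
    using length_bool by (auto simp: words_ab_def)
  show "finite {P :: bool list. set P \<subseteq> UNIV \<and> length P = a + b}"
    by (rule finite_lists_length_eq) simp
qed

lemma card_words: "real (card (words K m)) = multinom (map m [1..<Suc K])"
proof -
  let ?A = "Msum K m"
  have sz: "size ?A = (\<Sum>i\<in>{1..K}. m i)" unfolding Msum_def by (simp add: size_multiset_sum)
  have sm: "set_mset ?A = {i\<in>{1..K}. m i \<noteq> 0}"
    by (auto simp: count_Msum set_mset_def split: if_splits)
  have pr: "(\<Prod>x\<in>set_mset ?A. fact (count ?A x)) = (\<Prod>i\<in>{1..K}. fact (m i) :: nat)"
  proof -
    have "(\<Prod>x\<in>set_mset ?A. fact (count ?A x)) = (\<Prod>x\<in>{i\<in>{1..K}. m i \<noteq> 0}. fact (m x) :: nat)"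
      unfolding sm by (rule prod.cong) (auto simp: count_Msum)
    also have "\<dots> = (\<Prod>i\<in>{1..K}. fact (m i))"
      by (rule prod.mono_neutral_left) auto
    finally show ?thesis .
  qed
  have "card (words K m) = fact (size ?A) div (\<Prod>x\<in>set_mset ?A. fact (count ?A x))"
    unfolding words_perm by (rule card_permutations_of_multiset(1))
  moreover have "(\<Prod>x\<in>set_mset ?A. fact (count ?A x) :: nat) dvd fact (size ?A)"
    by (rule card_permutations_of_multiset(2))
  ultimately have "real (card (words K m)) = real (fact (size ?A)) / real (\<Prod>x\<in>set_mset ?A. fact (count ?A x))"
    by (simp add: real_of_nat_div)
  also have "\<dots> = fact (\<Sum>i\<in>{1..K}. m i) / (\<Prod>i\<in>{1..K}. fact (m i))"
    unfolding sz pr by (simp add: of_nat_prod)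
  also have "\<dots> = multinom (map m [1..<Suc K])"
  proof -
    have s: "sum_list (map m [1..<Suc K]) = (\<Sum>i\<in>{1..K}. m i)"
      by (simp only: interv_sum_list_conv_sum_set_nat set_upt atLeastLessThanSuc_atLeastAtMost)
    have p: "(\<Prod>x\<leftarrow>map m [1..<Suc K]. fact x) = (\<Prod>i\<in>{1..K}. fact (m i) :: real)"
    proof -
      have "(\<Prod>i\<in>{1..K}. fact (m i) :: real) = (\<Prod>i\<in>set [1..<Suc K]. fact (m i))"
        by (simp only: set_upt atLeastLessThanSuc_atLeastAtMost)
      also have "\<dots> = prod_list (map (\<lambda>i. fact (m i)) [1..<Suc K])"
        by (rule prod.distinct_set_conv_list) simp
      finally show ?thesis by (simp add: comp_def)
    qed
    show ?thesis unfolding multinom_def s p ..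
  qed
  finally show ?thesis .
qed

lemma fib_wf: "W \<in> fib d w P \<Longrightarrow> wf d W = w \<and> Pf d W = P"
  by (simp add: fib_def wf_def Pf_def)

lemma fib_disj: "(w, P) \<noteq> (w', P') \<Longrightarrow> fib d w P \<inter> fib d w' P' = {}"
  using fib_wf by blast

lemma comb_main:
  assumes d: "1 \<le> d"
  shows "(\<Sum>w\<in>words d m. \<Sum>P\<in>{P \<in> words_ab (m d) (m (Suc d)).
              (\<Sum>r=0..m d. S_count d w r * pi_star True False P r) = n}.
             \<Prod>r=0..m d. real ((pi_star True False P r + (\<Sum>l=1..d-1. pi_star d l w r))
                                  choose (pi_star True False P r)))
       = real (card {W \<in> words (Suc d) m. pat (Suc d) W = n})"
proof -
  let ?Pn = "\<lambda>w. {P \<in> words_ab (m d) (m (Suc d)). (\<Sum>r=0..m d. S_count d w r * pi_star True False P r) = n}"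
  have step1: "(\<Prod>r=0..m d. real ((pi_star True False P r + (\<Sum>l=1..d-1. pi_star d l w r))
                                  choose (pi_star True False P r))) = real (card (fib d w P))"
    if w: "w \<in> words d m" and P: "P \<in> words_ab (m d) (m (Suc d))" for w P
  proof -
    have sw: "set w \<subseteq> {1..d}" using w by (simp add: words_def)
    have cw: "count_list w d = m d" using w d by (simp add: words_def)
    have cP: "count_list P True = m d" using P by (simp add: words_ab_def)
    have "(\<Prod>r=0..m d. real ((pi_star True False P r + (\<Sum>l=1..d-1. pi_star d l w r))
                                  choose (pi_star True False P r))) = real (Phi d w P)"
      unfolding Phi_def cw by (simp add: of_nat_prod pi_star_pcount asum_def)
    also have "Phi d w P = cnt d w P" using cnt_Phi[OF sw] cw cP by simp
    also have "cnt d w P = card (fib d w P)" using fib_card[OF sw] by simp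
    finally show ?thesis .
  qed
  have fin_fib: "finite (fib d w P)" if "w \<in> words d m" for w P
    using fib_card[of w d P] that by (simp add: words_def)
  have fin_Pn: "finite (?Pn w)" for w using finite_words_ab by simp
  have "(\<Sum>w\<in>words d m. \<Sum>P\<in>?Pn w. \<Prod>r=0..m d. real ((pi_star True False P r + (\<Sum>l=1..d-1. pi_star d l w r))
                                  choose (pi_star True False P r)))
      = (\<Sum>w\<in>words d m. \<Sum>P\<in>?Pn w. real (card (fib d w P)))"
    by (intro sum.cong refl step1) auto
  also have "\<dots> = (\<Sum>w\<in>words d m. real (card (\<Union>P\<in>?Pn w. fib d w P)))"
  proof (intro sum.cong refl)
    fix w assume w: "w \<in> words d m"
    have "card (\<Union>P\<in>?Pn w. fib d w P) = (\<Sum>P\<in>?Pn w. card (fib d w P))"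
    proof (rule card_UN_disjoint)
      show "finite (?Pn w)" by (rule fin_Pn)
      show "\<forall>P\<in>?Pn w. finite (fib d w P)" using fin_fib[OF w] by blast
      show "\<forall>P\<in>?Pn w. \<forall>P'\<in>?Pn w. P \<noteq> P' \<longrightarrow> fib d w P \<inter> fib d w P' = {}"
        using fib_disj by blast
    qed
    then show "(\<Sum>P\<in>?Pn w. real (card (fib d w P))) = real (card (\<Union>P\<in>?Pn w. fib d w P))"
      by simp
  qed
  also have "\<dots> = real (card (\<Union>w\<in>words d m. \<Union>P\<in>?Pn w. fib d w P))"
  proof -
    have "card (\<Union>w\<in>words d m. \<Union>P\<in>?Pn w. fib d w P) = (\<Sum>w\<in>words d m. card (\<Union>P\<in>?Pn w. fib d w P))"
    proof (rule card_UN_disjoint)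
      show "finite (words d m)" by (rule finite_words)
      show "\<forall>w\<in>words d m. finite (\<Union>P\<in>?Pn w. fib d w P)" using fin_fib fin_Pn by blast
      show "\<forall>w\<in>words d m. \<forall>w'\<in>words d m. w \<noteq> w' \<longrightarrow> (\<Union>P\<in>?Pn w. fib d w P) \<inter> (\<Union>P\<in>?Pn w'. fib d w' P) = {}"
        using fib_disj by blast
    qed
    then show ?thesis by simp
  qed
  also have "(\<Union>w\<in>words d m. \<Union>P\<in>?Pn w. fib d w P) = {W \<in> words (Suc d) m. pat (Suc d) W = n}"
  proof (intro set_eqI iffI)
    fix W assume "W \<in> (\<Union>w\<in>words d m. \<Union>P\<in>?Pn w. fib d w P)"
    then obtain w P where w: "w \<in> words d m" and P: "P \<in> ?Pn w" and W: "W \<in> fib d w P" by blast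
    have sW: "set W \<subseteq> {1..Suc d}" using W by (simp add: fib_def)
    have e: "wf d W = w" "Pf d W = P" using fib_wf[OF W] by auto
    have cnts: "count_list W i = m i" if "i \<in> {1..Suc d}" for i
    proof (cases "i = Suc d")
      case True
      then show ?thesis using count_Pf_False[of d W] e P by (simp add: words_ab_def)
    next
      case False
      then have "i \<in> {1..d}" using that by auto
      then show ?thesis using count_wf[of d W i] e w False by (simp add: words_def)
    qed
    have Wm: "W \<in> words (Suc d) m" using sW cnts by (simp add: words_def)
    have cd: "count_list W d = m d" using cnts[of d] d by simp
    have "pat (Suc d) W = n"
      using decomp[OF d sW] cd e P by (simp add: pi_star_pcount)
    then show "W \<in> {W \<in> words (Suc d) m. pat (Suc d) W = n}" using Wm by simp
  next
    fix W assume W: "W \<in> {W \<in> words (Suc d) m. pat (Suc d) W = n}"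
    have sW: "set W \<subseteq> {1..Suc d}" using W by (simp add: words_def)
    have cnts: "count_list W i = m i" if "i \<in> {1..Suc d}" for i using W that by (simp add: words_def)
    have cd: "count_list W d = m d" using cnts[of d] d by simp
    have "set (wf d W) \<subseteq> {1..d}" using sW by (auto simp: wf_def)
    then have wm: "wf d W \<in> words d m"
      using cnts by (auto simp: words_def count_wf)
    have Pm: "Pf d W \<in> words_ab (m d) (m (Suc d))"
      using cnts[of d] cnts[of "Suc d"] d by (simp add: words_ab_def count_Pf_True count_Pf_False)
    have "(\<Sum>r=0..m d. S_count d (wf d W) r * pi_star True False (Pf d W) r) = n"
      using decomp[OF d sW] cd W by (simp add: pi_star_pcount)
    then have "Pf d W \<in> ?Pn (wf d W)" using Pm by simp
    moreover have "W \<in> fib d (wf d W) (Pf d W)" using sW by (simp add: fib_def wf_def Pf_def)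
    ultimately show "W \<in> (\<Union>w\<in>words d m. \<Union>P\<in>?Pn w. fib d w P)" using wm by blast
  qed
  finally show ?thesis .
qed


locale geo =
  fixes r0 :: real and k :: nat
  assumes k3: "3 \<le> k" and r1: "1 / real k < r0" and r2: "r0 < 1 / real (k - 1)"
begin

definition ell :: real where "ell = real k * r0 - 1"
definition ax :: "nat \<Rightarrow> real" where "ax j = 1 - real (k - j) * r0"

lemma kpos: "real k > 0" using k3 by simp
lemma kr: "real k * r0 > 1"
  using r1 kpos by (simp add: field_simps)
lemma kr': "real (k - 1) * r0 < 1"
proof -
  have "real (k - 1) > 0" using k3 by simp
  then show ?thesis using r2 by (simp add: field_simps)
qed
lemma r0pos: "r0 > 0"
  using r1 kpos by (smt (verit) divide_pos_pos)
lemma ell_pos: "ell > 0" using kr by (simp add: ell_def)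
lemma ell_lt: "ell < r0"
proof -
  have "real (k - 1) = real k - 1" using k3 by simp
  then show ?thesis using kr' by (simp add: ell_def algebra_simps)
qed

lemma lens_eq: "j \<le> k \<Longrightarrow> lens r0 k j = {ax j <..< ax j + ell}"
  by (simp add: lens_def ax_def ell_def of_nat_diff algebra_simps)

lemma ax_Suc: "j < k \<Longrightarrow> ax (Suc j) = ax j + r0"
  by (simp add: ax_def of_nat_diff algebra_simps)

lemma lens_sub01:
  assumes "j \<in> {1..k-1}" shows "lens r0 k j \<subseteq> {0<..<1}"
proof -
  have "k - j \<le> k - 1" using assms by auto
  then have "real (k - j) \<le> real (k - 1)" by (rule of_nat_mono)
  then have a: "real (k - j) * r0 < 1" using kr' r0pos by (smt (verit) mult_right_mono)
  have "real j \<le> real (k - 1)" using assms by simp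
  then have b: "real j * r0 < 1" using kr' r0pos by (smt (verit) mult_right_mono)
  show ?thesis using a b by (auto simp: lens_def)
qed

lemma lens_disj:
  assumes i: "i \<in> {1..k-1}" and j: "j \<in> {1..k-1}" and ij: "i \<noteq> j"
  shows "lens r0 k i \<inter> lens r0 k j = {}"
proof -
  have *: "lens r0 k a \<inter> lens r0 k b = {}" if a: "a \<in> {1..k-1}" "b \<in> {1..k-1}" "a < b" for a b
  proof (rule ccontr)
    assume "lens r0 k a \<inter> lens r0 k b \<noteq> {}"
    then obtain y where "y \<in> lens r0 k a \<inter> lens r0 k b" by blast
    then have y1: "y < real a * r0" and y2: "1 - real (k - b) * r0 < y"
      by (auto simp: lens_def)
    have "real (k - b) + real a \<le> real (k - 1)" using a by simp
    then have "(real (k - b) + real a) * r0 \<le> real (k - 1) * r0" using r0pos by (simp add: mult_right_mono)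
    then have "real (k - b) * r0 + real a * r0 \<le> real (k - 1) * r0" by (simp only: distrib_right)
    then show False using y1 y2 kr' by linarith
  qed
  show ?thesis
  proof (cases "i < j")
    case True then show ?thesis using * i j by blast
  next
    case False then have "j < i" using ij by simp
    then show ?thesis using * i j by blast
  qed
qed

lemma adj_step:
  assumes j: "1 \<le> j" "Suc j \<le> k - 1" and v: "v \<in> lens r0 k j" and v': "v' \<in> lens r0 k (Suc j)"
  shows "adj r0 v v' \<longleftrightarrow> v' - ax (Suc j) < v - ax j"
proof -
  have v1: "ax j < v" "v < ax j + ell" using v j lens_eq[of j] by auto
  have v2: "ax (Suc j) < v'" "v' < ax (Suc j) + ell" using v' j lens_eq[of "Suc j"] by auto
  have s: "ax (Suc j) = ax j + r0" using j ax_Suc by simp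
  have "v < v'" using v1 v2 s ell_lt by simp
  then show ?thesis using s by (auto simp: adj_def)
qed

lemma adj_0: assumes "v \<in> lens r0 k 1" shows "adj r0 0 v"
proof -
  have "1 \<in> {1..k-1}" using k3 by simp
  then have "lens r0 k 1 \<subseteq> {0<..<1}" by (rule lens_sub01)
  then have "v \<in> {0<..<1}" using assms by blast
  moreover have "v < r0" using assms by (simp add: lens_def)
  ultimately show ?thesis by (simp add: adj_def)
qed

lemma adj_1: assumes "v \<in> lens r0 k (k - 1)" shows "adj r0 v 1"
proof -
  have "k - 1 \<in> {1..k-1}" using k3 by simp
  then have "lens r0 k (k - 1) \<subseteq> {0<..<1}" by (rule lens_sub01)
  then have "v \<in> {0<..<1}" using assms by blast
  moreover have "1 - r0 < v" using assms k3 by (simp add: lens_def)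
  ultimately show ?thesis by (simp add: adj_def)
qed

lemma path_lens:
  assumes vs: "vs \<in> hop_paths r0 k \<omega>" and j: "j \<in> {1..k-1}"
  shows "vs ! j \<in> lens r0 k j \<inter> points \<omega>"
proof -
  have len: "length vs = Suc k" and v0: "vs ! 0 = 0" and vk: "vs ! k = 1"
    and ad: "\<And>i. i < k \<Longrightarrow> \<bar>vs ! i - vs ! Suc i\<bar> < r0"
    and sv: "set vs \<subseteq> vertices \<omega>"
    using vs by (auto simp: hop_paths_def adj_def)
  have up: "j' \<le> k \<Longrightarrow> vs ! j' \<le> real j' * r0 \<and> (1 \<le> j' \<longrightarrow> vs ! j' < real j' * r0)" for j'
  proof (induction j')
    case 0 then show ?case using v0 by simp
  next
    case (Suc j')
    then have h0: "vs ! j' \<le> real j' * r0" by simp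
    have h1: "vs ! Suc j' < vs ! j' + r0" using ad[of j'] Suc.prems by (simp add: abs_less_iff)
    have "real (Suc j') * r0 = real j' * r0 + r0" by (simp add: algebra_simps)
    then show ?case using h0 h1 by linarith
  qed
  have down: "i \<le> k \<Longrightarrow> vs ! (k - i) \<ge> 1 - real i * r0 \<and> (1 \<le> i \<longrightarrow> vs ! (k - i) > 1 - real i * r0)" for i
  proof (induction i)
    case 0 then show ?case using vk by simp
  next
    case (Suc i)
    then have h0: "vs ! (k - i) \<ge> 1 - real i * r0" by simp
    have e: "Suc (k - Suc i) = k - i" using Suc by simp
    have "\<bar>vs ! (k - Suc i) - vs ! Suc (k - Suc i)\<bar> < r0" using ad Suc by simp
    then have h1: "vs ! (k - Suc i) > vs ! (k - i) - r0" unfolding e by (simp add: abs_less_iff)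
    have "real (Suc i) * r0 = real i * r0 + r0" by (simp add: algebra_simps)
    then show ?case using h0 h1 by linarith
  qed
  have "j \<le> k" using j by auto
  then have a: "vs ! j < real j * r0" using up[of j] j by simp
  have e: "k - (k - j) = j" and kj: "1 \<le> k - j" "k - j \<le> k" using j by auto
  have "vs ! (k - (k - j)) > 1 - real (k - j) * r0" using down[OF kj(2)] kj(1) by blast
  then have b: "vs ! j > 1 - real (k - j) * r0" unfolding e .
  have L: "vs ! j \<in> lens r0 k j" using a b by (simp add: lens_def)
  have "vs ! j \<in> vertices \<omega>" using sv len j by (auto intro: nth_mem)
  moreover have "vs ! j \<noteq> 0" "vs ! j \<noteq> 1" using lens_sub01[OF j] L by auto
  ultimately show ?thesis using L by (auto simp: vertices_def)
qed

end


lemma count_card: "count_list W j = card {p. p < length W \<and> W ! p = j}"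
proof -
  have "count_list W j = length (occs W j)" by (simp add: length_occs)
  also have "\<dots> = card (set (occs W j))" by (simp add: distinct_card[OF distinct_occs])
  finally show ?thesis by (simp add: set_occs)
qed

context geo begin

definition Fset :: "nat \<Rightarrow> nat list \<Rightarrow> nat list \<Rightarrow> (nat \<Rightarrow> real) set" where
  "Fset N \<iota> W = {x. (\<forall>p<length \<iota>. x (\<iota> ! p) \<in> lens r0 k (W ! p)) \<and>
      (\<forall>i<N. i \<notin> set \<iota> \<longrightarrow> (\<forall>j\<in>{1..k-1}. x i \<notin> lens r0 k j)) \<and>
      (\<forall>p. Suc p < length \<iota> \<longrightarrow> x (\<iota> ! Suc p) - ax (W ! Suc p) < x (\<iota> ! p) - ax (W ! p))}"

definition mkpath :: "(nat \<Rightarrow> real) \<Rightarrow> nat list \<Rightarrow> (nat \<Rightarrow> nat) \<Rightarrow> real list" where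
  "mkpath x \<iota> p = 0 # map (\<lambda>j. x (\<iota> ! p j)) [1..<k] @ [1]"

lemma mkpath_length: "length (mkpath x \<iota> p) = Suc k"
  using k3 by (simp add: mkpath_def)

lemma mkpath_0: "mkpath x \<iota> p ! 0 = 0"
  by (simp add: mkpath_def)

lemma mkpath_k: "mkpath x \<iota> p ! k = 1"
proof -
  have "k = Suc (k - 1)" using k3 by simp
  then have "mkpath x \<iota> p ! k = (map (\<lambda>j. x (\<iota> ! p j)) [1..<k] @ [1]) ! (k - 1)"
    unfolding mkpath_def by (metis nth_Cons_Suc)
  also have "\<dots> = 1" using k3 by (simp add: nth_append)
  finally show ?thesis .
qed

lemma mkpath_j: assumes "j \<in> {1..k-1}" shows "mkpath x \<iota> p ! j = x (\<iota> ! p j)"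
proof -
  have "j = Suc (j - 1)" using assms by simp
  then have "mkpath x \<iota> p ! j = (map (\<lambda>j. x (\<iota> ! p j)) [1..<k] @ [1]) ! (j - 1)"
    unfolding mkpath_def by (metis nth_Cons_Suc)
  have jl: "j - 1 < length (map (\<lambda>j. x (\<iota> ! p j)) [1..<k])" using assms by auto
  then have "(map (\<lambda>j. x (\<iota> ! p j)) [1..<k] @ [1]) ! (j - 1) = map (\<lambda>j. x (\<iota> ! p j)) [1..<k] ! (j - 1)"
    by (simp only: nth_append if_True)
  also have "\<dots> = x (\<iota> ! p j)" using assms jl by simp
  finally show ?thesis using \<open>mkpath x \<iota> p ! j = _\<close> by simp
qed

lemma lens_unique: "x \<in> lens r0 k i \<Longrightarrow> x \<in> lens r0 k j \<Longrightarrow> i \<in> {1..k-1} \<Longrightarrow> j \<in> {1..k-1} \<Longrightarrow> i = j"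
  using lens_disj by blast

context
  fixes N \<iota> W x
  assumes F: "x \<in> Fset N \<iota> W" and dist: "distinct \<iota>" and sub: "set \<iota> \<subseteq> {..<N}"
    and Wsub: "set W \<subseteq> {1..k-1}" and Wlen: "length W = length \<iota>"
begin

lemma F_mem: "p < length \<iota> \<Longrightarrow> x (\<iota> ! p) \<in> lens r0 k (W ! p)"
  using F by (simp add: Fset_def)

lemma W_rng: "p < length \<iota> \<Longrightarrow> W ! p \<in> {1..k-1}"
  using Wsub Wlen by (metis nth_mem subsetD)

lemma F_udec: "p < q \<Longrightarrow> q < length \<iota> \<Longrightarrow> x (\<iota> ! q) - ax (W ! q) < x (\<iota> ! p) - ax (W ! p)"
proof (induction q rule: less_induct)
  case (less q)
  obtain q' where q': "q = Suc q'" using less.prems by (cases q) auto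
  have step: "x (\<iota> ! q) - ax (W ! q) < x (\<iota> ! q') - ax (W ! q')"
    using F less.prems q' by (simp add: Fset_def)
  show ?case
  proof (cases "p = q'")
    case True then show ?thesis using step by simp
  next
    case False
    then have "x (\<iota> ! q') - ax (W ! q') < x (\<iota> ! p) - ax (W ! p)"
      using less.IH[of q'] less.prems q' by auto
    then show ?thesis using step by simp
  qed
qed

lemma F_inj: assumes "p < length \<iota>" "q < length \<iota>" "x (\<iota> ! p) = x (\<iota> ! q)" shows "p = q"
proof -
  have "W ! p = W ! q"
    using lens_unique[OF F_mem[OF assms(1)]] F_mem[OF assms(2)] W_rng assms by simp
  then show "p = q"
    using F_udec[of p q] F_udec[of q p] assms by (cases "p < q"; cases "q < p") auto
qed

lemma F_in:
  assumes "i < N" "j \<in> {1..k-1}" "x i \<in> lens r0 k j"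
  shows "\<exists>p<length \<iota>. \<iota> ! p = i \<and> W ! p = j"
proof -
  have "i \<in> set \<iota>" using F assms by (auto simp: Fset_def)
  then obtain p where p: "p < length \<iota>" "\<iota> ! p = i" by (auto simp: in_set_conv_nth)
  have "W ! p = j" using lens_unique[OF F_mem[OF p(1)]] p W_rng assms by simp
  then show ?thesis using p by blast
qed

lemma F_count:
  assumes j: "j \<in> {1..k-1}"
  shows "card (x ` {..<N} \<inter> lens r0 k j) = count_list W j"
proof -
  have e: "x ` {..<N} \<inter> lens r0 k j = (\<lambda>p. x (\<iota> ! p)) ` {p. p < length \<iota> \<and> W ! p = j}"
  proof (intro set_eqI iffI)
    fix y assume "y \<in> x ` {..<N} \<inter> lens r0 k j"
    then obtain i where i: "i < N" "y = x i" "x i \<in> lens r0 k j" by auto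
    obtain p where "p < length \<iota>" "\<iota> ! p = i" "W ! p = j" using F_in[OF i(1) j i(3)] by blast
    then show "y \<in> (\<lambda>p. x (\<iota> ! p)) ` {p. p < length \<iota> \<and> W ! p = j}" using i by auto
  next
    fix y assume "y \<in> (\<lambda>p. x (\<iota> ! p)) ` {p. p < length \<iota> \<and> W ! p = j}"
    then obtain p where p: "p < length \<iota>" "W ! p = j" "y = x (\<iota> ! p)" by auto
    have "\<iota> ! p < N" using sub p(1) by (meson lessThan_iff nth_mem subsetD)
    then show "y \<in> x ` {..<N} \<inter> lens r0 k j" using F_mem[OF p(1)] p by auto
  qed
  have "inj_on (\<lambda>p. x (\<iota> ! p)) {p. p < length \<iota> \<and> W ! p = j}"
    using F_inj by (auto simp: inj_on_def)
  then have "card (x ` {..<N} \<inter> lens r0 k j) = card {p. p < length \<iota> \<and> W ! p = j}"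
    unfolding e by (rule card_image)
  then show ?thesis using Wlen by (simp add: count_card)
qed

lemma F_sigma: "card (hop_paths r0 k (N, x)) = pat (k - 1) W"
proof -
  have pts: "points (N, x) = x ` {..<N}" by (simp add: points_def)
  have bij: "bij_betw (mkpath x \<iota>) (chains (k - 1) W) (hop_paths r0 k (N, x))"
  proof (rule bij_betw_imageI)
    show "inj_on (mkpath x \<iota>) (chains (k - 1) W)"
    proof
      fix p p' assume p: "p \<in> chains (k - 1) W" and p': "p' \<in> chains (k - 1) W"
        and e: "mkpath x \<iota> p = mkpath x \<iota> p'"
      show "p = p'"
      proof (rule PiE_ext)
        show "p \<in> {1..k-1} \<rightarrow>\<^sub>E {..<length W}" "p' \<in> {1..k-1} \<rightarrow>\<^sub>E {..<length W}"
          using p p' by (auto simp: chains_def)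
      next
        fix j assume j: "j \<in> {1..k-1}"
        have "x (\<iota> ! p j) = x (\<iota> ! p' j)" using e mkpath_j[OF j, of x \<iota>] by metis
        moreover have "p j < length \<iota>" "p' j < length \<iota>" using p p' j Wlen by (auto simp: chains_def PiE_def Pi_def)
        ultimately show "p j = p' j" using F_inj by blast
      qed
    qed
  next
    show "mkpath x \<iota> ` chains (k - 1) W = hop_paths r0 k (N, x)"
    proof (intro set_eqI iffI)
      fix vs assume "vs \<in> mkpath x \<iota> ` chains (k - 1) W"
      then obtain p where p: "p \<in> chains (k - 1) W" and vs: "vs = mkpath x \<iota> p" by blast
      have pl: "p j < length \<iota>" if "j \<in> {1..k-1}" for j using p that Wlen by (auto simp: chains_def PiE_def Pi_def)
      have pw: "W ! p j = j" if "j \<in> {1..k-1}" for j using p that by (auto simp: chains_def)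
      have pm: "x (\<iota> ! p j) \<in> lens r0 k j" if "j \<in> {1..k-1}" for j
        using F_mem[OF pl[OF that]] pw[OF that] by simp
      have pinc: "p j < p (Suc j)" if "j \<in> {1..<k-1}" for j using p that by (auto simp: chains_def)
      have "set vs \<subseteq> vertices (N, x)"
      proof
        fix v assume "v \<in> set vs"
        then have "v = 0 \<or> v = 1 \<or> (\<exists>j\<in>{1..<k}. v = x (\<iota> ! p j))" using vs by (auto simp: mkpath_def)
        moreover have "\<iota> ! p j < N" if "j \<in> {1..<k}" for j
        proof -
          have "p j < length \<iota>" using pl that by auto
          then have "\<iota> ! p j \<in> set \<iota>" by simp
          then show ?thesis using sub by auto
        qed
        ultimately show "v \<in> vertices (N, x)" by (auto simp: vertices_def points_def)
      qed
      moreover have "\<forall>i<k. adj r0 (vs ! i) (vs ! Suc i)"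
      proof (intro allI impI)
        fix i assume i: "i < k"
        consider "i = 0" | "i = k - 1" "i \<noteq> 0" | "1 \<le> i" "Suc i \<le> k - 1" using i by linarith
        then show "adj r0 (vs ! i) (vs ! Suc i)"
        proof cases
          case 1
          have "vs ! Suc i = x (\<iota> ! p 1)" using vs 1 mkpath_j[of 1] k3 by simp
          then show ?thesis using 1 vs mkpath_0 adj_0 pm[of 1] k3 by simp
        next
          case 2
          have "vs ! i = x (\<iota> ! p (k-1))" using vs 2 mkpath_j[of "k-1"] k3 by simp
          moreover have "vs ! Suc i = 1" using vs 2 mkpath_k k3 by simp
          ultimately show ?thesis using adj_1 pm[of "k-1"] k3 by simp
        next
          case 3
          have ji: "i \<in> {1..k-1}" "Suc i \<in> {1..k-1}" using 3 by auto
          have v1: "vs ! i = x (\<iota> ! p i)" using vs mkpath_j[OF ji(1)] by simp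
          have v2: "vs ! Suc i = x (\<iota> ! p (Suc i))" using vs mkpath_j[OF ji(2)] by simp
          have "x (\<iota> ! p (Suc i)) - ax (W ! p (Suc i)) < x (\<iota> ! p i) - ax (W ! p i)"
            using F_udec[OF pinc pl[OF ji(2)]] 3 by simp
          then have "x (\<iota> ! p (Suc i)) - ax (Suc i) < x (\<iota> ! p i) - ax i" using pw ji by simp
          then show ?thesis using adj_step[OF 3 pm[OF ji(1)] pm[OF ji(2)]] v1 v2 by simp
        qed
      qed
      ultimately show "vs \<in> hop_paths r0 k (N, x)"
        using vs mkpath_length mkpath_0 mkpath_k by (simp add: hop_paths_def)
    next
      fix vs assume vs: "vs \<in> hop_paths r0 k (N, x)"
      have len: "length vs = Suc k" and v0: "vs ! 0 = 0" and vk: "vs ! k = 1"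
        and ad: "\<And>i. i < k \<Longrightarrow> adj r0 (vs ! i) (vs ! Suc i)"
        using vs by (auto simp: hop_paths_def)
      have ex: "\<exists>q. q < length \<iota> \<and> W ! q = j \<and> x (\<iota> ! q) = vs ! j" if j: "j \<in> {1..k-1}" for j
      proof -
        have "vs ! j \<in> lens r0 k j \<inter> x ` {..<N}" using path_lens[OF vs j] pts by simp
        then obtain i where i: "i < N" "vs ! j = x i" "x i \<in> lens r0 k j" by auto
        obtain q where "q < length \<iota>" "\<iota> ! q = i" "W ! q = j" using F_in[OF i(1) j i(3)] by blast
        then show ?thesis using i by auto
      qed
      define p where "p = (\<lambda>j\<in>{1..k-1}. SOME q. q < length \<iota> \<and> W ! q = j \<and> x (\<iota> ! q) = vs ! j)"
      have pp: "p j < length \<iota> \<and> W ! p j = j \<and> x (\<iota> ! p j) = vs ! j" if j: "j \<in> {1..k-1}" for j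
        using someI_ex[OF ex[OF j]] j by (simp add: p_def)
      have pc: "p \<in> chains (k - 1) W"
        unfolding chains_def
      proof (intro CollectI conjI ballI)
        show "p \<in> {1..k-1} \<rightarrow>\<^sub>E {..<length W}" using pp Wlen by (auto simp: p_def)
      next
        fix j assume "j \<in> {1..k-1}" then show "W ! p j = j" using pp by simp
      next
        fix j assume j: "j \<in> {1..<k-1}"
        have ji: "j \<in> {1..k-1}" "Suc j \<in> {1..k-1}" using j by auto
        have 3: "1 \<le> j" "Suc j \<le> k - 1" using j by auto
        have "j < k" using j by auto
        then have "adj r0 (vs ! j) (vs ! Suc j)" by (rule ad)
        then have lt: "vs ! Suc j - ax (Suc j) < vs ! j - ax j"
          using adj_step[OF 3] path_lens[OF vs ji(1)] path_lens[OF vs ji(2)] by simp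
        show "p j < p (Suc j)"
        proof (rule ccontr)
          assume "\<not> p j < p (Suc j)"
          then have "p (Suc j) < p j \<or> p (Suc j) = p j" by auto
          then show False
          proof
            assume "p (Suc j) < p j"
            then have "x (\<iota> ! p j) - ax (W ! p j) < x (\<iota> ! p (Suc j)) - ax (W ! p (Suc j))"
              using F_udec pp[OF ji(1)] by blast
            then show False using lt pp[OF ji(1)] pp[OF ji(2)] by simp
          next
            assume "p (Suc j) = p j"
            then show False using lt pp[OF ji(1)] pp[OF ji(2)] by simp
          qed
        qed
      qed
      have "vs = mkpath x \<iota> p"
      proof (rule nth_equalityI)
        show "length vs = length (mkpath x \<iota> p)" using len mkpath_length by simp
      next
        fix i assume "i < length vs"
        then have i: "i < Suc k" using len by simp
        consider "i = 0" | "i = k" | "i \<in> {1..k-1}" using i by fastforce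
        then show "vs ! i = mkpath x \<iota> p ! i"
        proof cases
          case 1 then show ?thesis using v0 mkpath_0 by simp
        next
          case 2 then show ?thesis using vk mkpath_k by simp
        next
          case 3 then show ?thesis using mkpath_j[OF 3] pp[OF 3] by simp
        qed
      qed
      then show "vs \<in> mkpath x \<iota> ` chains (k - 1) W" using pc by blast
    qed
  qed
  then show ?thesis unfolding pat_def by (simp add: bij_betw_same_card)
qed

end

end


context geo begin

definition col :: "(nat \<Rightarrow> real) \<Rightarrow> nat \<Rightarrow> nat" where
  "col x i = (THE j. j \<in> {1..k-1} \<and> x i \<in> lens r0 k j)"

lemma col_eq: "j \<in> {1..k-1} \<Longrightarrow> x i \<in> lens r0 k j \<Longrightarrow> col x i = j"
  unfolding col_def by (rule the_equality) (auto dest: lens_unique)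

definition uu :: "(nat \<Rightarrow> real) \<Rightarrow> nat \<Rightarrow> real" where
  "uu x i = x i - ax (col x i)"

definition Lidx :: "nat \<Rightarrow> (nat \<Rightarrow> real) \<Rightarrow> nat set" where
  "Lidx N x = {i. i < N \<and> (\<exists>j\<in>{1..k-1}. x i \<in> lens r0 k j)}"

definition Zset :: "nat \<Rightarrow> (nat \<Rightarrow> real) set" where
  "Zset N = {x. \<exists>i<N. \<exists>i'<N. i \<noteq> i' \<and> (\<exists>j\<in>{1..k-1}. \<exists>j'\<in>{1..k-1}. x i - x i' = ax j - ax j')}"

definition sidx :: "nat \<Rightarrow> (nat \<Rightarrow> real) \<Rightarrow> nat list" where
  "sidx N x = sort_key (\<lambda>i. - uu x i) (sorted_list_of_set (Lidx N x))"

lemma col_rng: "i \<in> Lidx N x \<Longrightarrow> col x i \<in> {1..k-1} \<and> x i \<in> lens r0 k (col x i)"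
  unfolding Lidx_def using col_eq by auto

lemma construct:
  assumes Z: "x \<notin> Zset N"
  defines "\<iota> \<equiv> sidx N x"
  shows "distinct \<iota>" "set \<iota> = Lidx N x" "set \<iota> \<subseteq> {..<N}" "set (map (col x) \<iota>) \<subseteq> {1..k-1}"
    "x \<in> Fset N \<iota> (map (col x) \<iota>)"
proof -
  have fin: "finite (Lidx N x)" unfolding Lidx_def by auto
  show d: "distinct \<iota>" unfolding \<iota>_def sidx_def by simp
  show s: "set \<iota> = Lidx N x" unfolding \<iota>_def sidx_def using fin by simp
  then show "set \<iota> \<subseteq> {..<N}" by (auto simp: Lidx_def)
  show "set (map (col x) \<iota>) \<subseteq> {1..k-1}" using s col_rng by auto
  have inj: "inj_on (\<lambda>i. - uu x i) (Lidx N x)"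
  proof
    fix i i' assume i: "i \<in> Lidx N x" and i': "i' \<in> Lidx N x" and e: "- uu x i = - uu x i'"
    show "i = i'"
    proof (rule ccontr)
      assume ne: "i \<noteq> i'"
      have "x i - x i' = ax (col x i) - ax (col x i')" using e by (simp add: uu_def)
      then have "x \<in> Zset N" using i i' ne col_rng[OF i] col_rng[OF i'] unfolding Zset_def Lidx_def by blast
      then show False using Z by simp
    qed
  qed
  have srt: "sorted (map (\<lambda>i. - uu x i) \<iota>)" unfolding \<iota>_def sidx_def by (rule sorted_sort_key)
  have dm: "distinct (map (\<lambda>i. - uu x i) \<iota>)" using d inj s by (simp add: distinct_map)
  have ss: "sorted_wrt (<) (map (\<lambda>i. - uu x i) \<iota>)" using srt dm by (simp add: strict_sorted_iff)
  show "x \<in> Fset N \<iota> (map (col x) \<iota>)"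
    unfolding Fset_def
  proof (intro CollectI conjI allI impI ballI)
    fix p assume p: "p < length \<iota>"
    then have "\<iota> ! p \<in> Lidx N x" using s nth_mem by blast
    then show "x (\<iota> ! p) \<in> lens r0 k (map (col x) \<iota> ! p)" using col_rng p by simp
  next
    fix i j assume "i < N" "i \<notin> set \<iota>" "j \<in> {1..k-1}"
    then show "x i \<notin> lens r0 k j" using s by (auto simp: Lidx_def)
  next
    fix p assume p: "Suc p < length \<iota>"
    have "map (\<lambda>i. - uu x i) \<iota> ! p < map (\<lambda>i. - uu x i) \<iota> ! Suc p"
      using sorted_wrt_nth_less[OF ss, of p "Suc p"] p by simp
    then show "x (\<iota> ! Suc p) - ax (map (col x) \<iota> ! Suc p) < x (\<iota> ! p) - ax (map (col x) \<iota> ! p)"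
      using p by (simp add: uu_def)
  qed
qed

lemma F_Lidx:
  assumes F: "x \<in> Fset N \<iota> W" and dist: "distinct \<iota>" and sub: "set \<iota> \<subseteq> {..<N}"
    and Wsub: "set W \<subseteq> {1..k-1}" and Wlen: "length W = length \<iota>"
  shows "set \<iota> = Lidx N x" "W = map (col x) \<iota>"
    "sorted_wrt (<) (map (\<lambda>i. - uu x i) \<iota>)"
proof -
  note FF = F_mem[OF F dist sub Wsub Wlen] W_rng[OF F dist sub Wsub Wlen]
    F_in[OF F dist sub Wsub Wlen] F_udec[OF F dist sub Wsub Wlen]
  show "set \<iota> = Lidx N x"
  proof (intro set_eqI iffI)
    fix i assume "i \<in> set \<iota>"
    then obtain p where p: "p < length \<iota>" "\<iota> ! p = i" by (auto simp: in_set_conv_nth)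
    have "\<iota> ! p \<in> set \<iota>" using p(1) by simp
    then have "i < N" using sub p(2) by auto
    then show "i \<in> Lidx N x" using FF(1)[OF p(1)] FF(2)[OF p(1)] p(2) by (auto simp: Lidx_def)
  next
    fix i assume "i \<in> Lidx N x"
    then obtain j where "i < N" "j \<in> {1..k-1}" "x i \<in> lens r0 k j" by (auto simp: Lidx_def)
    then obtain p where "p < length \<iota>" "\<iota> ! p = i" using FF(3) by blast
    then show "i \<in> set \<iota>" by auto
  qed
  have cw: "col x (\<iota> ! p) = W ! p" if "p < length \<iota>" for p
    using col_eq[of "W ! p" x "\<iota> ! p", OF FF(2)[OF that] FF(1)[OF that]] .
  show "W = map (col x) \<iota>" by (rule nth_equalityI) (auto simp: Wlen cw)
  show "sorted_wrt (<) (map (\<lambda>i. - uu x i) \<iota>)"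
  proof (subst sorted_wrt_iff_nth_less, intro allI impI)
    fix p q assume "p < q" "q < length (map (\<lambda>i. - uu x i) \<iota>)"
    then show "map (\<lambda>i. - uu x i) \<iota> ! p < map (\<lambda>i. - uu x i) \<iota> ! q"
      using FF(4)[of p q] cw by (simp add: uu_def)
  qed
qed

lemma F_disj:
  assumes F: "x \<in> Fset N \<iota> W" and dist: "distinct \<iota>" and sub: "set \<iota> \<subseteq> {..<N}"
    and Wsub: "set W \<subseteq> {1..k-1}" and Wlen: "length W = length \<iota>"
  assumes F': "x \<in> Fset N \<iota>' W'" and dist': "distinct \<iota>'" and sub': "set \<iota>' \<subseteq> {..<N}"
    and Wsub': "set W' \<subseteq> {1..k-1}" and Wlen': "length W' = length \<iota>'"
  shows "\<iota> = \<iota>' \<and> W = W'"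
proof -
  note A = F_Lidx[OF F dist sub Wsub Wlen] and B = F_Lidx[OF F' dist' sub' Wsub' Wlen']
  let ?f = "\<lambda>i. - uu x i"
  have "map ?f \<iota> = map ?f \<iota>'"
    using A(3) B(3) A(1) B(1) by (intro sorted_distinct_set_unique) (auto simp: strict_sorted_iff)
  moreover have "inj_on ?f (set \<iota> \<union> set \<iota>')"
    using A(3) A(1) B(1) by (simp add: strict_sorted_iff distinct_map)
  ultimately have "\<iota> = \<iota>'" by (simp add: inj_on_map_eq_map)
  then show ?thesis using A(2) B(2) by simp
qed

end


abbreviation UU :: "real measure" where "UU \<equiv> uniform_measure lborel {0..1::real}"
abbreviation PX :: "(nat \<Rightarrow> real) measure" where "PX \<equiv> PiM UNIV (\<lambda>_::nat. UU)"

lemma prob_UU: "prob_space UU"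
  by (intro prob_space_uniform_measure) auto

lemma sets_UU[simp, measurable_cong]: "sets UU = sets borel"
  by simp

lemma space_UU[simp]: "space UU = UNIV" by simp

lemma prob_PX: "prob_space PX"
  by (intro prob_space_PiM prob_UU)

lemma space_PX[simp]: "space PX = UNIV"
  by (auto simp: space_PiM PiE_def extensional_def)

interpretation PXp: product_prob_space "\<lambda>_::nat. UU" UNIV
  by (intro product_prob_spaceI prob_UU)

lemma emeasure_UU: "A \<in> sets borel \<Longrightarrow> emeasure UU A = emeasure lborel ({0..1} \<inter> A)"
  by (subst emeasure_uniform_measure) (auto simp: divide_ennreal_def)

lemma distr_PiM_coord:
  assumes t: "\<And>i. t i \<in> borel_measurable borel" and d: "\<And>i. distr UU UU (t i) = UU"
  shows "distr PX PX (\<lambda>x i. t i (x i)) = PX"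
proof (rule measure_eqI_PiM_infinite[symmetric, OF refl])
  have mt: "(\<lambda>x i. t i (x i)) \<in> measurable PX PX"
  proof (rule measurable_PiM_single')
    fix i :: nat
    have "(\<lambda>x. x i) \<in> measurable PX UU" by (rule measurable_component_singleton) simp
    moreover have "t i \<in> measurable UU UU" using t[of i] by simp
    ultimately show "(\<lambda>x. t i (x i)) \<in> measurable PX UU" by (rule measurable_compose)
  qed (auto simp: PiE_def extensional_def)
  show "sets (distr PX PX (\<lambda>x i. t i (x i))) = sets PX" by simp
  show "finite_measure PX" using prob_PX by (simp add: prob_space_def)
  fix A J assume J: "finite J" "J \<subseteq> (UNIV :: nat set)" and A: "\<And>i. i \<in> J \<Longrightarrow> A i \<in> sets UU"
  have At: "t j -` A j \<in> sets UU" if "j \<in> J" for j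
    using A[OF that] t[of j] by (simp add: measurable_sets_borel)
  have pre: "(\<lambda>x i. t i (x i)) -` prod_emb UNIV (\<lambda>_. UU) J (Pi\<^sub>E J A) =
      prod_emb UNIV (\<lambda>_. UU) J (Pi\<^sub>E J (\<lambda>j. t j -` A j))"
    by (auto simp: prod_emb_def PiE_def Pi_def extensional_def)
  have "emeasure (distr PX PX (\<lambda>x i. t i (x i))) (prod_emb UNIV (\<lambda>_. UU) J (Pi\<^sub>E J A)) =
      emeasure PX (prod_emb UNIV (\<lambda>_. UU) J (Pi\<^sub>E J (\<lambda>j. t j -` A j)))"
    using mt J A by (subst emeasure_distr) (auto intro!: sets_PiM_I simp: pre)
  also have "\<dots> = (\<Prod>j\<in>J. emeasure UU (t j -` A j))"
    using J At by (intro PXp.emeasure_PiM_emb) auto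
  also have "\<dots> = (\<Prod>j\<in>J. emeasure UU (A j))"
  proof (rule prod.cong[OF refl])
    fix j assume j: "j \<in> J"
    have "emeasure UU (A j) = emeasure (distr UU UU (t j)) (A j)" using d[of j] by simp
    also have "\<dots> = emeasure UU (t j -` A j \<inter> space UU)"
      using A[OF j] t[of j] by (intro emeasure_distr) auto
    finally show "emeasure UU (t j -` A j) = emeasure UU (A j)" by simp
  qed
  also have "\<dots> = emeasure PX (prod_emb UNIV (\<lambda>_. UU) J (Pi\<^sub>E J A))"
    using J A by (intro PXp.emeasure_PiM_emb[symmetric]) auto
  finally show "emeasure PX (prod_emb UNIV (\<lambda>_. UU) J (Pi\<^sub>E J A)) =
      emeasure (distr PX PX (\<lambda>x i. t i (x i))) (prod_emb UNIV (\<lambda>_. UU) J (Pi\<^sub>E J A))" by simp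
qed

lemma emeasure_lborel_translate:
  assumes "S \<in> sets borel" shows "emeasure lborel ((\<lambda>y. c + y) -` S) = emeasure lborel (S :: real set)"
proof -
  have "emeasure lborel S = emeasure (distr lborel borel ((+) c)) S" by (simp add: lborel_distr_plus)
  also have "\<dots> = emeasure lborel ((+) c -` S \<inter> space lborel)" using assms by (intro emeasure_distr) auto
  finally show ?thesis by simp
qed

lemma null_diag:
  assumes "i \<noteq> i'"
  shows "{x :: nat \<Rightarrow> real. x i - x i' = c} \<in> null_sets PX"
proof -
  let ?Q = "PiM (UNIV - {i}) (\<lambda>_::nat. UU)"
  have Qp: "prob_space ?Q" by (intro prob_space_PiM prob_UU)
  have eq: "PX = distr (UU \<Otimes>\<^sub>M ?Q) PX (\<lambda>(s, X). X(i := s))"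
    using distr_pair_PiM_eq_PiM[of "UNIV - {i}" "\<lambda>_. UU" i] prob_UU by (simp add: insert_absorb)
  have "Measurable.pred PX (\<lambda>x. x i - x i' = c)" by measurable
  then have S: "{x :: nat \<Rightarrow> real. x i - x i' = c} \<in> sets PX" by (simp add: pred_def)
  have mf: "(\<lambda>(s, X). X(i := s)) \<in> measurable (UU \<Otimes>\<^sub>M ?Q) PX"
  proof -
    have m1: "(\<lambda>(s, X). (X, s)) \<in> measurable (UU \<Otimes>\<^sub>M ?Q) (?Q \<Otimes>\<^sub>M UU)"
      by measurable
    have m2: "(\<lambda>(f, y). f(i := y)) \<in> measurable (?Q \<Otimes>\<^sub>M UU) (PiM (insert i (UNIV - {i})) (\<lambda>_. UU))"
      using measurable_add_dim[where I="UNIV - {i}" and M="\<lambda>_. UU" and i=i] by simp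
    have "(\<lambda>(s, X). X(i := s)) \<in> measurable (UU \<Otimes>\<^sub>M ?Q) (PiM (insert i (UNIV - {i})) (\<lambda>_. UU))"
      using measurable_comp[OF m1 m2] by (simp add: comp_def case_prod_beta)
    then show ?thesis by (simp add: insert_absorb)
  qed
  have pre: "(\<lambda>(s, X). X(i := s)) -` {x. x i - x i' = c} \<inter> space (UU \<Otimes>\<^sub>M ?Q) =
      {(s, X). s = X i' + c} \<inter> space (UU \<Otimes>\<^sub>M ?Q)"
    using assms by auto
  have S2: "{(s, X). s = X i' + c} \<inter> space (UU \<Otimes>\<^sub>M ?Q) \<in> sets (UU \<Otimes>\<^sub>M ?Q)"
  proof -
    have "(\<lambda>X. X i') \<in> measurable ?Q UU" using assms by (intro measurable_component_singleton) auto
    then have "(\<lambda>X. X i') \<in> borel_measurable ?Q" by (simp add: measurable_cong_sets[OF refl sets_UU])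
    then have "Measurable.pred (UU \<Otimes>\<^sub>M ?Q) (\<lambda>p. fst p = snd p i' + c)" by measurable
    moreover have "{(s, X). s = X i' + c} \<inter> space (UU \<Otimes>\<^sub>M ?Q) = {x \<in> space (UU \<Otimes>\<^sub>M ?Q). fst x = snd x i' + c}"
      by auto
    ultimately show ?thesis by (simp add: pred_def)
  qed
  interpret pq: pair_sigma_finite UU ?Q
    using prob_UU Qp by (intro pair_sigma_finite.intro prob_space_imp_sigma_finite)
  have "emeasure PX {x. x i - x i' = c} = emeasure (UU \<Otimes>\<^sub>M ?Q) ({(s, X). s = X i' + c} \<inter> space (UU \<Otimes>\<^sub>M ?Q))"
    by (subst eq, subst emeasure_distr[OF mf]) (use S eq pre in auto)
  also have "\<dots> = \<integral>\<^sup>+ X. emeasure UU ((\<lambda>s. (s, X)) -` ({(s, X). s = X i' + c} \<inter> space (UU \<Otimes>\<^sub>M ?Q))) \<partial>?Q"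
    by (rule pq.emeasure_pair_measure_alt2[OF S2])
  also have "\<dots> = \<integral>\<^sup>+ X. 0 \<partial>?Q"
  proof (rule nn_integral_cong)
    fix X assume X: "X \<in> space ?Q"
    have "(\<lambda>s. (s, X)) -` ({(s, X). s = X i' + c} \<inter> space (UU \<Otimes>\<^sub>M ?Q)) = {X i' + c}"
      using X by (auto simp: space_pair_measure)
    moreover have "emeasure UU {X i' + c} = 0"
    proof -
      have "emeasure UU {X i' + c} = emeasure lborel ({0..1} \<inter> {X i' + c})" by (rule emeasure_UU) simp
      also have "\<dots> \<le> emeasure lborel {X i' + c}" by (rule emeasure_mono) auto
      finally show ?thesis by simp
    qed
    ultimately show "emeasure UU ((\<lambda>s. (s, X)) -` ({(s, X). s = X i' + c} \<inter> space (UU \<Otimes>\<^sub>M ?Q))) = 0" by simp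
  qed
  finally have "emeasure PX {x. x i - x i' = c} = 0" by simp
  then show ?thesis using S by (simp add: null_sets_def)
qed

lemma card_image_first:
  assumes "finite S" "inj_on h S"
  shows "card (g ` S) = card {s\<in>S. \<forall>s'\<in>S. h s' < (h s :: nat) \<longrightarrow> g s' \<noteq> g s}"
proof -
  let ?T = "{s\<in>S. \<forall>s'\<in>S. h s' < h s \<longrightarrow> g s' \<noteq> g s}"
  have "bij_betw g ?T (g ` S)"
  proof (rule bij_betw_imageI)
    show "inj_on g ?T"
    proof
      fix s s' assume s: "s \<in> ?T" and s': "s' \<in> ?T" and e: "g s = g s'"
      have "\<not> h s' < h s" "\<not> h s < h s'" using s s' e by auto
      then have "h s = h s'" by simp
      then show "s = s'" using assms(2) s s' by (auto dest: inj_onD)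
    qed
  next
    show "g ` ?T = g ` S"
    proof
      show "g ` ?T \<subseteq> g ` S" by auto
    next
      show "g ` S \<subseteq> g ` ?T"
      proof
        fix y assume "y \<in> g ` S"
        then have ne: "{s\<in>S. g s = y} \<noteq> {}" by auto
        have fin: "finite (h ` {s\<in>S. g s = y})" using assms(1) by simp
        obtain s where s: "s \<in> S" "g s = y" "h s = Min (h ` {s\<in>S. g s = y})"
          using Min_in[OF fin] ne by auto
        have "s \<in> ?T"
        proof -
          have "\<not> h s' < h s" if "s' \<in> S" "g s' = g s" for s'
            using Min_le[OF fin, of "h s'"] that s by auto
          then show ?thesis using s by auto
        qed
        then show "y \<in> g ` ?T" using s by auto
      qed
    qed
  qed
  then show ?thesis by (simp add: bij_betw_same_card)
qed

lemma sets_card_eq: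
  assumes "finite T" and Q: "\<And>p. p \<in> T \<Longrightarrow> Measurable.pred M (\<lambda>x. Q x p)"
  shows "{x\<in>space M. card {p\<in>T. Q x p} = c} \<in> sets M"
proof -
  have "Measurable.pred M (\<lambda>x. \<exists>S\<in>Pow T. card S = c \<and> (\<forall>p\<in>T. Q x p = (p \<in> S)))"
    using assms by (intro pred_intros_finite pred_intros_logic) (auto intro: Q)
  moreover have "(\<exists>S\<in>Pow T. card S = c \<and> (\<forall>p\<in>T. Q x p = (p \<in> S))) \<longleftrightarrow> card {p\<in>T. Q x p} = c" for x
  proof
    assume "\<exists>S\<in>Pow T. card S = c \<and> (\<forall>p\<in>T. Q x p = (p \<in> S))"
    then obtain S where "S \<subseteq> T" "card S = c" "\<forall>p\<in>T. Q x p = (p \<in> S)" by auto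
    moreover then have "{p\<in>T. Q x p} = S" by auto
    ultimately show "card {p\<in>T. Q x p} = c" by simp
  next
    assume "card {p\<in>T. Q x p} = c"
    then show "\<exists>S\<in>Pow T. card S = c \<and> (\<forall>p\<in>T. Q x p = (p \<in> S))"
      by (intro bexI[of _ "{p\<in>T. Q x p}"]) auto
  qed
  ultimately show ?thesis by (simp add: pred_def)
qed


lemma ennreal_div1[simp]: "(x::ennreal) / 1 = x"
  by (simp add: divide_ennreal_def)

context geo begin

lemma lens_borel[measurable]: "lens r0 k j \<in> sets borel"
  by (simp add: lens_def)

definition tau :: "nat \<Rightarrow> nat \<Rightarrow> real \<Rightarrow> real" where
  "tau a b y = (if y \<in> lens r0 k a then (ax b - ax a) + y else if y \<in> lens r0 k b then (ax a - ax b) + y else y)"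

lemma tau_meas: "tau a b \<in> borel_measurable borel"
  unfolding tau_def by measurable

lemma lens_shift:
  assumes "a \<in> {1..k-1}" "b \<in> {1..k-1}"
  shows "(ax b - ax a) + y \<in> lens r0 k b \<longleftrightarrow> y \<in> lens r0 k a"
  using assms lens_eq[of a] lens_eq[of b] by auto

lemma tau_same: "tau a a y = y"
  by (simp add: tau_def)

lemma tau_mem:
  assumes a: "a \<in> {1..k-1}" and b: "b \<in> {1..k-1}"
  shows "tau a b y \<in> lens r0 k b \<longleftrightarrow> y \<in> lens r0 k a"
proof (cases "a = b")
  case True then show ?thesis by (simp add: tau_same)
next
  case False
  note disj = lens_disj[OF a b False]
  show ?thesis
  proof (cases "y \<in> lens r0 k a")
    case True then show ?thesis using lens_shift[OF a b] by (simp add: tau_def)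
  next
    case ya: False
    show ?thesis
    proof (cases "y \<in> lens r0 k b")
      case True
      have "(ax a - ax b) + y \<in> lens r0 k a" using lens_shift[OF b a] True by simp
      then show ?thesis using ya True disj by (auto simp: tau_def)
    next
      case False then show ?thesis using ya by (simp add: tau_def)
    qed
  qed
qed

lemma tau_u: "y \<in> lens r0 k a \<Longrightarrow> tau a b y - ax b = y - ax a"
  by (simp add: tau_def)

lemma split3:
  assumes La: "La \<in> sets borel" and Lb: "Lb \<in> sets borel" and S: "S \<in> sets borel"
    and d: "La \<inter> Lb = {}"
  shows "emeasure lborel S = emeasure lborel (S \<inter> La) + emeasure lborel (S \<inter> Lb) + emeasure lborel (S - La - Lb)"
proof -
  have "emeasure lborel (S \<inter> La) + emeasure lborel (S \<inter> Lb) = emeasure lborel ((S \<inter> La) \<union> (S \<inter> Lb))"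
    using assms by (intro plus_emeasure) auto
  moreover have "emeasure lborel ((S \<inter> La) \<union> (S \<inter> Lb)) + emeasure lborel (S - La - Lb) = emeasure lborel (((S \<inter> La) \<union> (S \<inter> Lb)) \<union> (S - La - Lb))"
    using assms by (intro plus_emeasure) auto
  moreover have "((S \<inter> La) \<union> (S \<inter> Lb)) \<union> (S - La - Lb) = S" by auto
  ultimately show ?thesis by simp
qed

lemma tau_pres:
  assumes a: "a \<in> {1..k-1}" and b: "b \<in> {1..k-1}"
  shows "distr UU UU (tau a b) = UU"
proof (cases "a = b")
  case True
  have "tau a b = (\<lambda>y. y)" using True by (simp add: fun_eq_iff tau_same)
  then show ?thesis by (simp add: distr_id2)
next
  case False
  note disj = lens_disj[OF a b False]
  let ?La = "lens r0 k a" and ?Lb = "lens r0 k b"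
  have sa: "?La \<subseteq> {0..1}" "?Lb \<subseteq> {0..1}" using lens_sub01[OF a] lens_sub01[OF b] by auto
  show ?thesis
  proof (rule measure_eqI)
    show "sets (distr UU UU (tau a b)) = sets UU" by simp
  next
    fix A assume "A \<in> sets (distr UU UU (tau a b))"
    then have A: "A \<in> sets borel" by simp
    have pA: "tau a b -` A \<in> sets borel" using measurable_sets_borel[OF tau_meas A] by simp
    have "emeasure (distr UU UU (tau a b)) A = emeasure UU (tau a b -` A \<inter> space UU)"
      using A tau_meas by (intro emeasure_distr) auto
    also have "\<dots> = emeasure lborel ({0..1} \<inter> tau a b -` A)" using pA by (simp add: emeasure_UU)
    also have "\<dots> = emeasure lborel ({0..1} \<inter> tau a b -` A \<inter> ?La) + emeasure lborel ({0..1} \<inter> tau a b -` A \<inter> ?Lb)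
        + emeasure lborel ({0..1} \<inter> tau a b -` A - ?La - ?Lb)"
      using pA disj by (intro split3) auto
    also have "{0..1} \<inter> tau a b -` A \<inter> ?La = (\<lambda>y. (ax b - ax a) + y) -` (A \<inter> ?Lb)"
      using lens_shift[OF a b] sa by (auto simp: tau_def)
    also have "{0..1} \<inter> tau a b -` A \<inter> ?Lb = (\<lambda>y. (ax a - ax b) + y) -` (A \<inter> ?La)"
    proof -
      have "y \<in> ?Lb \<Longrightarrow> y \<notin> ?La" for y using disj by auto
      then show ?thesis using lens_shift[OF b a] sa by (auto simp: tau_def)
    qed
    also have "{0..1} \<inter> tau a b -` A - ?La - ?Lb = ({0..1} \<inter> A) - ?La - ?Lb"
      by (auto simp: tau_def)
    also have "emeasure lborel ((\<lambda>y. (ax b - ax a) + y) -` (A \<inter> ?Lb)) = emeasure lborel ({0..1} \<inter> A \<inter> ?Lb)"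
    proof -
      have eq: "A \<inter> ?Lb = {0..1} \<inter> A \<inter> ?Lb" using sa by auto
      show ?thesis unfolding eq[symmetric] by (rule emeasure_lborel_translate) (use A in simp)
    qed
    also have "emeasure lborel ((\<lambda>y. (ax a - ax b) + y) -` (A \<inter> ?La)) = emeasure lborel ({0..1} \<inter> A \<inter> ?La)"
    proof -
      have eq: "A \<inter> ?La = {0..1} \<inter> A \<inter> ?La" using sa by auto
      show ?thesis unfolding eq[symmetric] by (rule emeasure_lborel_translate) (use A in simp)
    qed
    also have "emeasure lborel ({0..1} \<inter> A \<inter> ?Lb) + emeasure lborel ({0..1} \<inter> A \<inter> ?La) + emeasure lborel ({0..1} \<inter> A - ?La - ?Lb)
        = emeasure lborel ({0..1} \<inter> A)"
      using split3[of ?La ?Lb "{0..1} \<inter> A"] A disj by (simp add: add_ac)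
    also have "\<dots> = emeasure UU A" using A by (simp add: emeasure_UU)
    finally show "emeasure (distr UU UU (tau a b)) A = emeasure UU A" .
  qed
qed

lemma Fset_pred: "Fset N \<iota> W = {x. (\<forall>p\<in>{..<length \<iota>}. x (\<iota> ! p) \<in> lens r0 k (W ! p)) \<and>
      (\<forall>i\<in>{..<N}. i \<notin> set \<iota> \<longrightarrow> (\<forall>j\<in>{1..k-1}. x i \<notin> lens r0 k j)) \<and>
      (\<forall>p\<in>{..<length \<iota>}. Suc p < length \<iota> \<longrightarrow> x (\<iota> ! Suc p) - ax (W ! Suc p) < x (\<iota> ! p) - ax (W ! p))}"
  by (auto simp: Fset_def)

lemma Fset_sets: "Fset N \<iota> W \<in> sets PX"
proof -
  have "Measurable.pred PX (\<lambda>x. (\<forall>p\<in>{..<length \<iota>}. x (\<iota> ! p) \<in> lens r0 k (W ! p)) \<and>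
      (\<forall>i\<in>{..<N}. i \<notin> set \<iota> \<longrightarrow> (\<forall>j\<in>{1..k-1}. x i \<notin> lens r0 k j)) \<and>
      (\<forall>p\<in>{..<length \<iota>}. Suc p < length \<iota> \<longrightarrow> x (\<iota> ! Suc p) - ax (W ! Suc p) < x (\<iota> ! p) - ax (W ! p)))"
    by measurable
  then show ?thesis unfolding Fset_pred by (simp add: pred_def)
qed

definition pos :: "nat list \<Rightarrow> nat \<Rightarrow> nat" where
  "pos \<iota> i = (THE p. p < length \<iota> \<and> \<iota> ! p = i)"

lemma pos_nth: "distinct \<iota> \<Longrightarrow> p < length \<iota> \<Longrightarrow> pos \<iota> (\<iota> ! p) = p"
  unfolding pos_def by (rule the_equality) (auto simp: nth_eq_iff_index_eq)

lemma F_invariant: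
  assumes dist: "distinct \<iota>" and sub: "set \<iota> \<subseteq> {..<N}"
    and W: "set W \<subseteq> {1..k-1}" "length W = length \<iota>"
    and W': "set W' \<subseteq> {1..k-1}" "length W' = length \<iota>"
  shows "emeasure PX (Fset N \<iota> W) = emeasure PX (Fset N \<iota> W')"
proof -
  define t where "t i = (if i \<in> set \<iota> then tau (W' ! pos \<iota> i) (W ! pos \<iota> i) else (\<lambda>y. y))" for i
  have rngW1: "W ! p \<in> {1..k-1}" if "p < length \<iota>" for p
  proof -
    have "W ! p \<in> set W" using that W(2) by simp
    then show ?thesis using W(1) by blast
  qed
  have rngW2: "W' ! p \<in> {1..k-1}" if "p < length \<iota>" for p
  proof -
    have "W' ! p \<in> set W'" using that W'(2) by simp
    then show ?thesis using W'(1) by blast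
  qed
  note rngW = rngW1 rngW2
  have tp: "t (\<iota> ! p) = tau (W' ! p) (W ! p)" if "p < length \<iota>" for p
    using that pos_nth[OF dist that] by (simp add: t_def)
  have tn: "t i = (\<lambda>y. y)" if "i \<notin> set \<iota>" for i using that by (simp add: t_def)
  have tm: "t i \<in> borel_measurable borel" for i by (simp add: t_def tau_meas)
  have td: "distr UU UU (t i) = UU" for i
  proof (cases "i \<in> set \<iota>")
    case True
    then obtain p where p: "p < length \<iota>" "i = \<iota> ! p" by (auto simp: in_set_conv_nth)
    then show ?thesis using tp[OF p(1)] tau_pres rngW[OF p(1)] by simp
  next
    case False then show ?thesis using tn[OF False] by (simp add: distr_id2)
  qed
  let ?\<Psi> = "\<lambda>x i. t i (x i)"
  have pre: "?\<Psi> -` Fset N \<iota> W = Fset N \<iota> W'"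
  proof (intro set_eqI iffI)
    fix x assume "x \<in> ?\<Psi> -` Fset N \<iota> W"
    then have F: "?\<Psi> x \<in> Fset N \<iota> W" by simp
    have mem: "x (\<iota> ! p) \<in> lens r0 k (W' ! p)" if "p < length \<iota>" for p
    proof -
      have "t (\<iota> ! p) (x (\<iota> ! p)) \<in> lens r0 k (W ! p)" using F that by (simp add: Fset_def)
      then show ?thesis using tp[OF that] tau_mem[OF rngW(2)[OF that] rngW(1)[OF that]] by simp
    qed
    show "x \<in> Fset N \<iota> W'"
      unfolding Fset_def
    proof (intro CollectI conjI allI impI ballI)
      fix p assume "p < length \<iota>" then show "x (\<iota> ! p) \<in> lens r0 k (W' ! p)" by (rule mem)
    next
      fix i j assume "i < N" "i \<notin> set \<iota>" "j \<in> {1..k-1}"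
      then show "x i \<notin> lens r0 k j" using F tn by (auto simp: Fset_def)
    next
      fix p assume p: "Suc p < length \<iota>"
      then have "t (\<iota> ! Suc p) (x (\<iota> ! Suc p)) - ax (W ! Suc p) < t (\<iota> ! p) (x (\<iota> ! p)) - ax (W ! p)"
        using F by (simp add: Fset_def)
      then show "x (\<iota> ! Suc p) - ax (W' ! Suc p) < x (\<iota> ! p) - ax (W' ! p)"
        using p tp mem tau_u by simp
    qed
  next
    fix x assume F: "x \<in> Fset N \<iota> W'"
    have mem: "x (\<iota> ! p) \<in> lens r0 k (W' ! p)" if "p < length \<iota>" for p
      using F that by (simp add: Fset_def)
    have "?\<Psi> x \<in> Fset N \<iota> W"
      unfolding Fset_def
    proof (intro CollectI conjI allI impI ballI)
      fix p assume p: "p < length \<iota>"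
      then show "t (\<iota> ! p) (x (\<iota> ! p)) \<in> lens r0 k (W ! p)"
        using tp[OF p] tau_mem[OF rngW(2)[OF p] rngW(1)[OF p]] mem[OF p] by simp
    next
      fix i j assume "i < N" "i \<notin> set \<iota>" "j \<in> {1..k-1}"
      then show "t i (x i) \<notin> lens r0 k j" using F tn by (auto simp: Fset_def)
    next
      fix p assume p: "Suc p < length \<iota>"
      then have "x (\<iota> ! Suc p) - ax (W' ! Suc p) < x (\<iota> ! p) - ax (W' ! p)"
        using F by (simp add: Fset_def)
      then show "t (\<iota> ! Suc p) (x (\<iota> ! Suc p)) - ax (W ! Suc p) < t (\<iota> ! p) (x (\<iota> ! p)) - ax (W ! p)"
        using p tp mem tau_u by simp
    qed
    then show "x \<in> ?\<Psi> -` Fset N \<iota> W" by simp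
  qed
  have "emeasure PX (Fset N \<iota> W) = emeasure (distr PX PX ?\<Psi>) (Fset N \<iota> W)"
    using distr_PiM_coord[OF tm td] by simp
  also have "\<dots> = emeasure PX (?\<Psi> -` Fset N \<iota> W \<inter> space PX)"
  proof (rule emeasure_distr)
    show "?\<Psi> \<in> measurable PX PX"
    proof (rule measurable_PiM_single')
      fix i :: nat
      have "(\<lambda>x. x i) \<in> measurable PX UU" by (rule measurable_component_singleton) simp
      moreover have "t i \<in> measurable UU UU" using tm[of i] by simp
      ultimately show "(\<lambda>x. t i (x i)) \<in> measurable PX UU" by (rule measurable_compose)
    qed (auto simp: PiE_def extensional_def)
    show "Fset N \<iota> W \<in> sets PX" by (rule Fset_sets)
  qed
  also have "\<dots> = emeasure PX (Fset N \<iota> W')" using pre by simp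
  finally show ?thesis .
qed

lemma Zset_null: "Zset N \<in> null_sets PX"
proof -
  let ?X = "{(i, i', j, j'). i < N \<and> i' < N \<and> i \<noteq> i' \<and> j \<in> {1..k-1} \<and> j' \<in> {1..k-1}}"
  have "Zset N = (\<Union>(i, i', j, j')\<in>?X. {x. x i - x i' = ax j - ax j'})"
    unfolding Zset_def by blast
  moreover have "countable ?X"
  proof (rule countable_finite, rule finite_subset)
    show "?X \<subseteq> {..<N} \<times> {..<N} \<times> {..k} \<times> {..k}" by auto
  qed auto
  ultimately show ?thesis
    by (auto intro!: null_sets_UN' null_diag)
qed

end


lemma pred_card:
  assumes "finite T" "\<And>p. p \<in> T \<Longrightarrow> Measurable.pred M (\<lambda>x. Q x p)"
  shows "Measurable.pred M (\<lambda>x. card {p\<in>T. Q x p} = c)"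
  using sets_card_eq[OF assms, where c=c] by (simp add: pred_def)

lemma pred_neq_real[measurable (raw)]:
  assumes [measurable]: "f \<in> borel_measurable M" "g \<in> borel_measurable M"
  shows "Measurable.pred M (\<lambda>x. (f x :: real) \<noteq> g x)"
proof -
  have "Measurable.pred M (\<lambda>x. f x < g x \<or> g x < f x)" by measurable
  moreover have "(f x \<noteq> g x) = (f x < g x \<or> g x < f x)" for x by auto
  ultimately show ?thesis by simp
qed

context geo begin

lemma lens_count_eq:
  "lens_count r0 k j (N, x) = card {i\<in>{..<N}. x i \<in> lens r0 k j \<and> (\<forall>i'\<in>{..<N}. x i' \<in> lens r0 k j \<longrightarrow> i' < i \<longrightarrow> x i' \<noteq> x i)}"
proof -
  have "points (N, x) \<inter> lens r0 k j = x ` {i\<in>{..<N}. x i \<in> lens r0 k j}" by (auto simp: points_def)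
  then have "lens_count r0 k j (N, x) = card (x ` {i\<in>{..<N}. x i \<in> lens r0 k j})" by (simp add: lens_count_def)
  also have "\<dots> = card {i\<in>{i\<in>{..<N}. x i \<in> lens r0 k j}. \<forall>i'\<in>{i\<in>{..<N}. x i \<in> lens r0 k j}. id i' < id i \<longrightarrow> x i' \<noteq> x i}"
    by (rule card_image_first) auto
  also have "{i\<in>{i\<in>{..<N}. x i \<in> lens r0 k j}. \<forall>i'\<in>{i\<in>{..<N}. x i \<in> lens r0 k j}. id i' < id i \<longrightarrow> x i' \<noteq> x i}
     = {i\<in>{..<N}. x i \<in> lens r0 k j \<and> (\<forall>i'\<in>{..<N}. x i' \<in> lens r0 k j \<longrightarrow> i' < i \<longrightarrow> x i' \<noteq> x i)}"
    by auto
  finally show ?thesis .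
qed

definition valid :: "(nat \<Rightarrow> real) \<Rightarrow> (nat \<Rightarrow> nat) \<Rightarrow> bool" where
  "valid x p \<longleftrightarrow> adj r0 0 (x (p 1)) \<and> (\<forall>j\<in>{1..<k-1}. adj r0 (x (p j)) (x (p (Suc j)))) \<and> adj r0 (x (p (k - 1))) 1"

lemma mkpath_upt_j: "j \<in> {1..k-1} \<Longrightarrow> p j < N \<Longrightarrow> mkpath x [0..<N] p ! j = x (p j)"
  by (simp add: mkpath_j)

lemma hop_paths_image:
  fixes N :: nat and x :: "nat \<Rightarrow> real"
  defines "T \<equiv> {1..k-1} \<rightarrow>\<^sub>E {..<N}"
  shows "hop_paths r0 k (N, x) = mkpath x [0..<N] ` {p\<in>T. valid x p}"
proof (intro set_eqI iffI)
  fix vs assume vs: "vs \<in> hop_paths r0 k (N, x)"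
  have len: "length vs = Suc k" and v0: "vs ! 0 = 0" and vk: "vs ! k = 1"
    and ad: "\<And>i. i < k \<Longrightarrow> adj r0 (vs ! i) (vs ! Suc i)"
    using vs by (auto simp: hop_paths_def)
  have ex: "\<exists>i. i < N \<and> x i = vs ! j" if j: "j \<in> {1..k-1}" for j
    using path_lens[OF vs j] by (auto simp: points_def)
  define p where "p = (\<lambda>j\<in>{1..k-1}. SOME i. i < N \<and> x i = vs ! j)"
  have pp: "p j < N \<and> x (p j) = vs ! j" if j: "j \<in> {1..k-1}" for j
    using someI_ex[OF ex[OF j]] j by (simp add: p_def)
  have pT: "p \<in> T" using pp by (auto simp: T_def p_def)
  have eq: "vs = mkpath x [0..<N] p"
  proof (rule nth_equalityI)
    show "length vs = length (mkpath x [0..<N] p)" using len mkpath_length by simp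
  next
    fix i assume "i < length vs"
    then have i: "i < Suc k" using len by simp
    consider "i = 0" | "i = k" | "i \<in> {1..k-1}" using i by fastforce
    then show "vs ! i = mkpath x [0..<N] p ! i"
    proof cases
      case 1 then show ?thesis using v0 mkpath_0 by simp
    next
      case 2 then show ?thesis using vk mkpath_k by simp
    next
      case 3 then show ?thesis using mkpath_upt_j[OF 3] pp[OF 3] by simp
    qed
  qed
  have "valid x p"
    unfolding valid_def
  proof (intro conjI ballI)
    have "1 \<in> {1..k-1}" using k3 by simp
    then have "x (p 1) = vs ! 1" using pp by simp
    then show "adj r0 0 (x (p 1))" using ad[of 0] v0 k3 by simp
  next
    have "k - 1 \<in> {1..k-1}" using k3 by simp
    then have "x (p (k-1)) = vs ! (k-1)" using pp by simp
    moreover have "Suc (k - 1) = k" using k3 by simp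
    ultimately show "adj r0 (x (p (k - 1))) 1" using ad[of "k-1"] vk k3 by simp
  next
    fix j assume j: "j \<in> {1..<k-1}"
    then have "j \<in> {1..k-1}" "Suc j \<in> {1..k-1}" "j < k" by auto
    then show "adj r0 (x (p j)) (x (p (Suc j)))" using pp ad by simp
  qed
  then show "vs \<in> mkpath x [0..<N] ` {p\<in>T. valid x p}" using eq pT by blast
next
  fix vs assume "vs \<in> mkpath x [0..<N] ` {p\<in>T. valid x p}"
  then obtain p where pT: "p \<in> T" and va: "valid x p" and vs: "vs = mkpath x [0..<N] p" by blast
  have pN: "p j < N" if "j \<in> {1..k-1}" for j using pT that by (auto simp: T_def)
  have nj: "vs ! j = x (p j)" if "j \<in> {1..k-1}" for j using vs mkpath_upt_j[of j p N x, OF that pN[OF that]] by simp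
  have "set vs \<subseteq> vertices (N, x)"
  proof
    fix v assume "v \<in> set vs"
    then have "v = 0 \<or> v = 1 \<or> (\<exists>j\<in>{1..<k}. v = x ([0..<N] ! p j))" using vs by (auto simp: mkpath_def)
    moreover have "[0..<N] ! p j = p j \<and> p j < N" if "j \<in> {1..<k}" for j using pN[of j] that by auto
    ultimately show "v \<in> vertices (N, x)" by (auto simp: vertices_def points_def)
  qed
  moreover have "\<forall>i<k. adj r0 (vs ! i) (vs ! Suc i)"
  proof (intro allI impI)
    fix i assume i: "i < k"
    consider "i = 0" | "i = k - 1" "i \<noteq> 0" | "1 \<le> i" "Suc i \<le> k - 1" using i by linarith
    then show "adj r0 (vs ! i) (vs ! Suc i)"
    proof cases
      case 1
      have "1 \<in> {1..k-1}" using k3 by simp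
      then show ?thesis using 1 vs mkpath_0 nj va by (simp add: valid_def)
    next
      case 2
      have "k - 1 \<in> {1..k-1}" using k3 by simp
      moreover have "vs ! Suc i = 1" using vs 2 mkpath_k k3 by simp
      ultimately show ?thesis using 2 nj va by (simp add: valid_def)
    next
      case 3
      have "i \<in> {1..k-1}" "Suc i \<in> {1..k-1}" "i \<in> {1..<k-1}" using 3 by auto
      then show ?thesis using nj va by (simp add: valid_def)
    qed
  qed
  ultimately show "vs \<in> hop_paths r0 k (N, x)"
    using vs mkpath_length mkpath_0 mkpath_k by (simp add: hop_paths_def)
qed

lemma mkpath_eq_iff:
  assumes "p \<in> {1..k-1} \<rightarrow>\<^sub>E {..<N}" "p' \<in> {1..k-1} \<rightarrow>\<^sub>E {..<N}"
  shows "mkpath x [0..<N] p' = mkpath x [0..<N] p \<longleftrightarrow> (\<forall>j\<in>{1..<k}. x (p' j) = x (p j))"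
proof -
  have "mkpath x [0..<N] p' = mkpath x [0..<N] p \<longleftrightarrow>
      map (\<lambda>j. x ([0..<N] ! p' j)) [1..<k] = map (\<lambda>j. x ([0..<N] ! p j)) [1..<k]"
    by (simp add: mkpath_def)
  also have "\<dots> \<longleftrightarrow> (\<forall>j\<in>{1..<k}. x ([0..<N] ! p' j) = x ([0..<N] ! p j))" by (simp add: map_eq_conv)
  also have "\<dots> \<longleftrightarrow> (\<forall>j\<in>{1..<k}. x (p' j) = x (p j))"
  proof -
    have "[0..<N] ! p' j = p' j" "[0..<N] ! p j = p j" if "j \<in> {1..<k}" for j
      using assms that by (auto simp: PiE_def Pi_def)
    then show ?thesis by auto
  qed
  finally show ?thesis .
qed

lemma sigma_eq:
  fixes N :: nat and x :: "nat \<Rightarrow> real"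
  defines "T \<equiv> {1..k-1} \<rightarrow>\<^sub>E {..<N}"
  shows "sigma_k r0 k (N, x) = card {p\<in>T. valid x p \<and>
     (\<forall>p'\<in>T. valid x p' \<longrightarrow> to_nat_on T p' < to_nat_on T p \<longrightarrow> (\<exists>j\<in>{1..<k}. x (p' j) \<noteq> x (p j)))}"
proof -
  have fT: "finite T" unfolding T_def by (intro finite_PiE) auto
  have inj: "inj_on (to_nat_on T) {p\<in>T. valid x p}"
    by (rule inj_on_subset[OF inj_on_to_nat_on[OF countable_finite[OF fT]]]) auto
  have "sigma_k r0 k (N, x) = card (mkpath x [0..<N] ` {p\<in>T. valid x p})"
    unfolding sigma_k_def T_def by (simp add: hop_paths_image)
  also have "\<dots> = card {p\<in>{p\<in>T. valid x p}. \<forall>p'\<in>{p\<in>T. valid x p}. to_nat_on T p' < to_nat_on T p \<longrightarrow> mkpath x [0..<N] p' \<noteq> mkpath x [0..<N] p}"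
    by (rule card_image_first[OF _ inj]) (use fT in simp)
  also have "\<dots> = card {p\<in>T. valid x p \<and>
     (\<forall>p'\<in>T. valid x p' \<longrightarrow> to_nat_on T p' < to_nat_on T p \<longrightarrow> (\<exists>j\<in>{1..<k}. x (p' j) \<noteq> x (p j)))}"
  proof (rule arg_cong[where f=card])
    show "{p\<in>{p\<in>T. valid x p}. \<forall>p'\<in>{p\<in>T. valid x p}. to_nat_on T p' < to_nat_on T p \<longrightarrow> mkpath x [0..<N] p' \<noteq> mkpath x [0..<N] p} =
      {p\<in>T. valid x p \<and> (\<forall>p'\<in>T. valid x p' \<longrightarrow> to_nat_on T p' < to_nat_on T p \<longrightarrow> (\<exists>j\<in>{1..<k}. x (p' j) \<noteq> x (p j)))}"
      using mkpath_eq_iff unfolding T_def by auto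
  qed
  finally show ?thesis .
qed

lemma valid_pred[measurable]: "Measurable.pred PX (\<lambda>x. valid x p)"
  unfolding valid_def adj_def by measurable

lemma ev_sets:
  "{x. \<forall>j\<in>{1..k-1}. lens_count r0 k j (N, x) = m j} \<in> sets PX"
  "{x. sigma_k r0 k (N, x) = n \<and> (\<forall>j\<in>{1..k-1}. lens_count r0 k j (N, x) = m j)} \<in> sets PX"
proof -
  let ?T = "{1..k-1} \<rightarrow>\<^sub>E {..<N}"
  have fT: "finite ?T" by (intro finite_PiE) auto
  have lc: "Measurable.pred PX (\<lambda>x. lens_count r0 k j (N, x) = m j)" for j
    unfolding lens_count_eq
  proof (intro pred_card)
    fix i show "Measurable.pred PX (\<lambda>x. x i \<in> lens r0 k j \<and> (\<forall>i'\<in>{..<N}. x i' \<in> lens r0 k j \<longrightarrow> i' < i \<longrightarrow> x i' \<noteq> x i))"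
      by measurable
  qed simp
  have sg: "Measurable.pred PX (\<lambda>x. sigma_k r0 k (N, x) = n)"
    unfolding sigma_eq
  proof (intro pred_card fT)
    fix p show "Measurable.pred PX (\<lambda>x. valid x p \<and> (\<forall>p'\<in>?T. valid x p' \<longrightarrow> to_nat_on ?T p' < to_nat_on ?T p \<longrightarrow> (\<exists>j\<in>{1..<k}. x (p' j) \<noteq> x (p j))))"
      using fT by measurable
  qed
  have a: "Measurable.pred PX (\<lambda>x. \<forall>j\<in>{1..k-1}. lens_count r0 k j (N, x) = m j)"
    by (intro pred_intros_finite lc) auto
  have b: "Measurable.pred PX (\<lambda>x. sigma_k r0 k (N, x) = n \<and> (\<forall>j\<in>{1..k-1}. lens_count r0 k j (N, x) = m j))"
    by (intro pred_intros_logic sg a)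
  show "{x. \<forall>j\<in>{1..k-1}. lens_count r0 k j (N, x) = m j} \<in> sets PX" using a by (simp add: pred_def)
  show "{x. sigma_k r0 k (N, x) = n \<and> (\<forall>j\<in>{1..k-1}. lens_count r0 k j (N, x) = m j)} \<in> sets PX"
    using b by (simp add: pred_def)
qed

end


lemma emeasure_sandwich:
  assumes "A \<in> sets M" "B \<in> sets M" "Z \<in> null_sets M" "A \<subseteq> B" "B \<subseteq> A \<union> Z"
  shows "emeasure M B = emeasure M A"
proof (rule antisym)
  have "emeasure M B \<le> emeasure M (A \<union> Z)" using assms by (intro emeasure_mono) auto
  also have "\<dots> = emeasure M A" using assms by (intro emeasure_Un_null_set) auto
  finally show "emeasure M B \<le> emeasure M A" .
  show "emeasure M A \<le> emeasure M B" using assms by (intro emeasure_mono) auto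
qed

context geo begin

definition Iset :: "nat \<Rightarrow> nat \<Rightarrow> nat list set" where
  "Iset N M = {\<iota>. distinct \<iota> \<and> set \<iota> \<subseteq> {..<N} \<and> length \<iota> = M}"

definition WL :: "nat \<Rightarrow> nat list set" where
  "WL M = {W. set W \<subseteq> {1..k-1} \<and> length W = M}"

definition UF :: "nat \<Rightarrow> nat \<Rightarrow> nat list set \<Rightarrow> (nat \<Rightarrow> real) set" where
  "UF N M S = (\<Union>\<iota>\<in>Iset N M. \<Union>W\<in>S. Fset N \<iota> W)"

definition Q :: "nat \<Rightarrow> nat \<Rightarrow> ennreal" where
  "Q N M = (\<Sum>\<iota>\<in>Iset N M. emeasure PX (Fset N \<iota> (replicate M 1)))"

lemma finite_Iset: "finite (Iset N M)"
proof (rule finite_subset)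
  show "Iset N M \<subseteq> {xs. set xs \<subseteq> {..<N} \<and> length xs = M}" by (auto simp: Iset_def)
  show "finite {xs. set xs \<subseteq> {..<N} \<and> length xs = M}" by (rule finite_lists_length_eq) simp
qed

lemma finite_WL: "finite (WL M)"
  unfolding WL_def by (rule finite_lists_length_eq) simp

lemma UF_sets: "finite S \<Longrightarrow> UF N M S \<in> sets PX"
  unfolding UF_def by (intro sets.finite_UN finite_Iset Fset_sets) auto

lemma rep1: "replicate M 1 \<in> WL M"
  using k3 by (auto simp: WL_def)

lemma UF_measure:
  assumes S: "S \<subseteq> WL M" "finite S"
  shows "emeasure PX (UF N M S) = of_nat (card S) * Q N M"
proof -
  let ?I = "Iset N M \<times> S"
  let ?F = "\<lambda>(\<iota>, W). Fset N \<iota> W"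
  have e: "UF N M S = \<Union> (?F ` ?I)" by (auto simp: UF_def)
  have disj: "disjoint_family_on ?F ?I"
  proof (unfold disjoint_family_on_def, intro ballI impI)
    fix a b assume a: "a \<in> ?I" and b: "b \<in> ?I" and ab: "a \<noteq> b"
    obtain \<iota> W where aa: "a = (\<iota>, W)" by (cases a)
    obtain \<iota>' W' where bb: "b = (\<iota>', W')" by (cases b)
    have i: "distinct \<iota>" "set \<iota> \<subseteq> {..<N}" "length \<iota> = M" "set W \<subseteq> {1..k-1}" "length W = M"
      using a aa S by (auto simp: Iset_def WL_def)
    have i': "distinct \<iota>'" "set \<iota>' \<subseteq> {..<N}" "length \<iota>' = M" "set W' \<subseteq> {1..k-1}" "length W' = M"
      using b bb S by (auto simp: Iset_def WL_def)
    show "?F a \<inter> ?F b = {}"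
    proof (rule ccontr)
      assume "?F a \<inter> ?F b \<noteq> {}"
      then obtain x where "x \<in> Fset N \<iota> W" "x \<in> Fset N \<iota>' W'" using aa bb by auto
      then have "\<iota> = \<iota>' \<and> W = W'" using i i' by (intro F_disj) auto
      then show False using ab aa bb by simp
    qed
  qed
  have "emeasure PX (UF N M S) = (\<Sum>a\<in>?I. emeasure PX (?F a))"
    unfolding e using finite_Iset S disj
    by (intro sum_emeasure[symmetric]) (auto intro: Fset_sets)
  also have "\<dots> = (\<Sum>(\<iota>, W)\<in>?I. emeasure PX (Fset N \<iota> W))"
    by (intro sum.cong refl) (auto split: prod.splits)
  also have "\<dots> = (\<Sum>\<iota>\<in>Iset N M. \<Sum>W\<in>S. emeasure PX (Fset N \<iota> W))"
    by (simp add: sum.cartesian_product)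
  also have "\<dots> = (\<Sum>\<iota>\<in>Iset N M. \<Sum>W\<in>S. emeasure PX (Fset N \<iota> (replicate M 1)))"
  proof (intro sum.cong refl)
    fix \<iota> W assume "\<iota> \<in> Iset N M" "W \<in> S"
    then show "emeasure PX (Fset N \<iota> W) = emeasure PX (Fset N \<iota> (replicate M 1))"
      using S rep1[of M] by (intro F_invariant) (auto simp: Iset_def WL_def)
  qed
  also have "\<dots> = of_nat (card S) * Q N M"
    by (simp add: Q_def sum_distrib_left)
  finally show ?thesis .
qed

context
  fixes m :: "nat \<Rightarrow> nat" and n :: nat
begin

definition Mt :: nat where "Mt = (\<Sum>j\<in>{1..k-1}. m j)"

definition Bx :: "nat \<Rightarrow> (nat \<Rightarrow> real) set" where
  "Bx N = {x. \<forall>j\<in>{1..k-1}. lens_count r0 k j (N, x) = m j}"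

definition ABx :: "nat \<Rightarrow> (nat \<Rightarrow> real) set" where
  "ABx N = {x. sigma_k r0 k (N, x) = n \<and> (\<forall>j\<in>{1..k-1}. lens_count r0 k j (N, x) = m j)}"

abbreviation WS where "WS \<equiv> words (k - 1) m"
abbreviation WSn where "WSn \<equiv> {W \<in> words (k - 1) m. pat (k - 1) W = n}"

lemma words_WL: "W \<in> WS \<Longrightarrow> W \<in> WL Mt"
proof -
  assume W: "W \<in> WS"
  have "length W = size (Msum (k-1) m)"
    using W unfolding words_perm by (rule length_finite_permutations_of_multiset)
  also have "\<dots> = Mt" by (simp add: Msum_def size_multiset_sum Mt_def)
  finally show ?thesis using W by (simp add: WL_def words_def)
qed

lemma F_props:
  assumes "\<iota> \<in> Iset N Mt" "W \<in> WS" "x \<in> Fset N \<iota> W"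
  shows "x \<in> Bx N" "pat (k - 1) W = n \<Longrightarrow> x \<in> ABx N"
proof -
  have d: "distinct \<iota>" "set \<iota> \<subseteq> {..<N}" "length \<iota> = Mt" using assms by (auto simp: Iset_def)
  have w: "set W \<subseteq> {1..k-1}" "length W = length \<iota>" using words_WL[OF assms(2)] d by (auto simp: WL_def)
  have c: "lens_count r0 k j (N, x) = m j" if "j \<in> {1..k-1}" for j
  proof -
    have "lens_count r0 k j (N, x) = count_list W j"
      using F_count[OF assms(3) d(1,2) w that] by (simp add: lens_count_def points_def)
    then show ?thesis using assms(2) that by (simp add: words_def)
  qed
  then show "x \<in> Bx N" by (simp add: Bx_def)
  have s: "sigma_k r0 k (N, x) = pat (k - 1) W"
    using F_sigma[OF assms(3) d(1,2) w] by (simp add: sigma_k_def)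
  show "pat (k - 1) W = n \<Longrightarrow> x \<in> ABx N" using c s by (simp add: ABx_def)
qed

lemma B_cover:
  assumes "x \<in> Bx N" "x \<notin> Zset N"
  shows "\<exists>\<iota>\<in>Iset N Mt. \<exists>W\<in>WS. x \<in> Fset N \<iota> W \<and> sigma_k r0 k (N, x) = pat (k - 1) W"
proof -
  let ?\<iota> = "sidx N x" and ?W = "map (col x) (sidx N x)"
  note c = construct[OF assms(2)]
  have w: "set ?W \<subseteq> {1..k-1}" "length ?W = length ?\<iota>" using c by auto
  have cnt: "count_list ?W j = m j" if "j \<in> {1..k-1}" for j
  proof -
    have "count_list ?W j = lens_count r0 k j (N, x)"
      using F_count[OF c(5) c(1) c(3) w that] by (simp add: lens_count_def points_def)
    then show ?thesis using assms(1) that by (simp add: Bx_def)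
  qed
  have Wm: "?W \<in> WS" using w cnt by (simp add: words_def)
  have "length ?W = Mt" using words_WL[OF Wm] by (simp add: WL_def)
  then have Ii: "?\<iota> \<in> Iset N Mt" using c by (simp add: Iset_def)
  have "sigma_k r0 k (N, x) = pat (k - 1) ?W"
    using F_sigma[OF c(5) c(1) c(3) w] by (simp add: sigma_k_def)
  then show ?thesis using Ii Wm c(5) by blast
qed

lemma finite_WS: "finite WS" by (rule finite_words)

lemma WS_WL: "WS \<subseteq> WL Mt" using words_WL by blast

lemma emeasure_Bx: "emeasure PX (Bx N) = of_nat (card WS) * Q N Mt"
proof -
  have "emeasure PX (Bx N) = emeasure PX (UF N Mt WS)"
  proof (rule emeasure_sandwich[OF UF_sets[OF finite_WS] _ Zset_null])
    show "Bx N \<in> sets PX" using ev_sets(1)[of N m] by (simp add: Bx_def)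
    show "UF N Mt WS \<subseteq> Bx N" using F_props(1) by (auto simp: UF_def)
    show "Bx N \<subseteq> UF N Mt WS \<union> Zset N"
    proof
      fix x assume x: "x \<in> Bx N"
      show "x \<in> UF N Mt WS \<union> Zset N"
      proof (cases "x \<in> Zset N")
        case False
        then obtain \<iota> W where "\<iota> \<in> Iset N Mt" "W \<in> WS" "x \<in> Fset N \<iota> W"
          using B_cover x by blast
        then show ?thesis by (auto simp: UF_def)
      qed simp
    qed
  qed
  also have "\<dots> = of_nat (card WS) * Q N Mt" by (rule UF_measure[OF WS_WL finite_WS])
  finally show ?thesis .
qed

lemma emeasure_ABx: "emeasure PX (ABx N) = of_nat (card WSn) * Q N Mt"
proof -
  have f: "finite WSn" using finite_WS by simp
  have "emeasure PX (ABx N) = emeasure PX (UF N Mt WSn)"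
  proof (rule emeasure_sandwich[OF UF_sets[OF f] _ Zset_null])
    show "ABx N \<in> sets PX" using ev_sets(2)[of N n m] by (simp add: ABx_def)
    show "UF N Mt WSn \<subseteq> ABx N" using F_props(2) by (auto simp: UF_def)
    show "ABx N \<subseteq> UF N Mt WSn \<union> Zset N"
    proof
      fix x assume x: "x \<in> ABx N"
      show "x \<in> UF N Mt WSn \<union> Zset N"
      proof (cases "x \<in> Zset N")
        case False
        have "x \<in> Bx N" using x by (simp add: ABx_def Bx_def)
        then obtain \<iota> W where "\<iota> \<in> Iset N Mt" "W \<in> WS" "x \<in> Fset N \<iota> W" "sigma_k r0 k (N, x) = pat (k - 1) W"
          using B_cover False by blast
        moreover have "sigma_k r0 k (N, x) = n" using x by (simp add: ABx_def)
        ultimately show ?thesis by (auto simp: UF_def)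
      qed simp
    qed
  qed
  also have "\<dots> = of_nat (card WSn) * Q N Mt" using WS_WL f by (intro UF_measure) auto
  finally show ?thesis .
qed

end

lemma Q_pos: "Q M M > 0"
proof -
  let ?L = "lens r0 k 1"
  have one: "1 \<in> {1..k-1}" using k3 by simp
  let ?E = "prod_emb UNIV (\<lambda>_. UU) {..<M} (Pi\<^sub>E {..<M} (\<lambda>_. ?L))"
  have EL: "?L \<in> sets UU" by simp
  have "emeasure UU ?L = emeasure lborel ({0..1} \<inter> ?L)" by (rule emeasure_UU) simp
  also have "{0..1} \<inter> ?L = ?L" using lens_sub01[OF one] by auto
  also have "emeasure lborel ?L = ennreal ell" using lens_eq[of 1] k3 ell_pos by simp
  finally have mL: "emeasure UU ?L = ennreal ell" .
  have "emeasure PX ?E = (\<Prod>i\<in>{..<M}. emeasure UU ?L)"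
    by (rule PXp.emeasure_PiM_emb) auto
  also have "\<dots> = ennreal ell ^ M" using mL by simp
  finally have mE: "emeasure PX ?E = ennreal ell ^ M" .
  have "ennreal ell ^ M = ennreal (ell ^ M)" using ell_pos by (simp add: ennreal_power)
  then have Epos: "emeasure PX ?E > 0" using mE ell_pos by simp
  have Es: "?E \<in> sets PX" by (intro sets_PiM_I) auto
  have sub: "?E \<subseteq> UF M M (WL M) \<union> Zset M"
  proof
    fix x assume xE: "x \<in> ?E"
    show "x \<in> UF M M (WL M) \<union> Zset M"
    proof (cases "x \<in> Zset M")
      case False
      note c = construct[OF False]
      have xi: "x i \<in> ?L" if "i < M" for i using xE that by (auto simp: prod_emb_def PiE_def Pi_def)
      have "Lidx M x = {..<M}"
      proof (intro set_eqI iffI)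
        fix i assume "i \<in> {..<M}" then show "i \<in> Lidx M x" using xi one unfolding Lidx_def by blast
      qed (auto simp: Lidx_def)
      then have len: "length (sidx M x) = M" using c(1) c(2) distinct_card by fastforce
      then have "sidx M x \<in> Iset M M" using c by (simp add: Iset_def)
      moreover have "map (col x) (sidx M x) \<in> WL M" using c len by (simp add: WL_def)
      ultimately show ?thesis using c(5) by (auto simp: UF_def)
    qed simp
  qed
  have Zs: "Zset M \<in> sets PX" using Zset_null[of M] by (simp add: null_sets_def)
  have "UF M M (WL M) \<union> Zset M \<in> sets PX" using UF_sets[OF finite_WL] Zs by (rule sets.Un)
  then have "emeasure PX ?E \<le> emeasure PX (UF M M (WL M) \<union> Zset M)"
    using sub by (intro emeasure_mono)
  also have "\<dots> = emeasure PX (UF M M (WL M))"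
    by (intro emeasure_Un_null_set UF_sets finite_WL Zset_null)
  also have "\<dots> = of_nat (card (WL M)) * Q M M" by (rule UF_measure) (auto simp: finite_WL)
  finally have "0 < of_nat (card (WL M)) * Q M M" using Epos by simp
  then show ?thesis by (metis mult_zero_right not_gr_zero)
qed

end


lemma PPP_space: "space (PPP lam) = UNIV"
  by (simp add: PPP_def space_pair_measure)

lemma PPP_sets: "sets (PPP lam) = sets (count_space UNIV \<Otimes>\<^sub>M PX)"
  unfolding PPP_def by (rule sets_pair_measure_cong) (simp_all add: sets_measure_pmf_count_space)

lemma PPP_event:
  assumes "\<And>N. {x. P N x} \<in> sets PX"
  shows "{\<omega> \<in> space (PPP lam). P (fst \<omega>) (snd \<omega>)} \<in> sets (PPP lam)"
proof -
  have "(\<lambda>\<omega>. P (fst \<omega>) (snd \<omega>)) \<in> measurable (count_space UNIV \<Otimes>\<^sub>M PX) (count_space UNIV)"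
  proof (rule measurable_pair_measure_countable1)
    fix N :: nat
    have "Measurable.pred PX (\<lambda>x. P N x)" using assms[of N] by (simp add: pred_def)
    then show "(\<lambda>y. P (fst (N, y)) (snd (N, y))) \<in> measurable PX (count_space UNIV)" by simp
  qed simp
  then have "Measurable.pred (PPP lam) (\<lambda>\<omega>. P (fst \<omega>) (snd \<omega>))"
    using measurable_cong_sets[OF PPP_sets refl] by blast
  then show ?thesis by (simp add: pred_def)
qed

lemma PPP_emeasure:
  assumes "\<And>N. {x. P N x} \<in> sets PX"
  shows "emeasure (PPP lam) {\<omega> \<in> space (PPP lam). P (fst \<omega>) (snd \<omega>)} =
     (\<integral>\<^sup>+ N. emeasure PX {x. P N x} \<partial>measure_pmf (poisson_pmf lam))"
proof -
  have s: "{\<omega> \<in> space (PPP lam). P (fst \<omega>) (snd \<omega>)} \<in> sets (measure_pmf (poisson_pmf lam) \<Otimes>\<^sub>M PX)"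
    using PPP_event[OF assms, of lam] by (simp add: PPP_def)
  have "emeasure (PPP lam) {\<omega> \<in> space (PPP lam). P (fst \<omega>) (snd \<omega>)} =
      (\<integral>\<^sup>+ N. emeasure PX (Pair N -` {\<omega> \<in> space (PPP lam). P (fst \<omega>) (snd \<omega>)}) \<partial>measure_pmf (poisson_pmf lam))"
    unfolding PPP_def by (rule PXp.P.emeasure_pair_measure_alt[OF s[unfolded PPP_def]])
  also have "\<dots> = (\<integral>\<^sup>+ N. emeasure PX {x. P N x} \<partial>measure_pmf (poisson_pmf lam))"
    by (simp add: PPP_space)
  finally show ?thesis .
qed

theorem theorem2p1:
  fixes lam r0 :: real and k n :: nat and m :: "nat \<Rightarrow> nat"
  assumes "lam > 0" and "k \<ge> 3"
    and "1 / real k < r0" and "r0 < 1 / real (k - 1)"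
  shows "cond_prob (PPP lam) (\<lambda>\<omega>. sigma_k r0 k \<omega> = n)
           (\<lambda>\<omega>. \<forall>j\<in>{1..k-1}. lens_count r0 k j \<omega> = m j)
         = (1 / multinom (map m [1..<k])) *
           (\<Sum>w\<in>words (k - 2) m.
              \<Sum>P\<in>{P \<in> words_ab (m (k - 2)) (m (k - 1)).
                     (\<Sum>r=0..m (k - 2). S_count (k - 2) w r * pi_star True False P r) = n}.
                \<Prod>r=0..m (k - 2).
                  real ((pi_star True False P r + (\<Sum>l=1..k-3. pi_star (k - 2) l w r))
                         choose (pi_star True False P r)))"
proof -
  interpret geo r0 k using assms by unfold_locales auto
  let ?WS = "words (k - 1) m"
  let ?WSn = "{W \<in> words (k - 1) m. pat (k - 1) W = n}"
  have d1: "1 \<le> k - 2" using assms by simp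
  have e1: "Suc (k - 2) = k - 1" and e2: "k - 2 - 1 = k - 3" and e3: "Suc (k - 1) = k" using assms by auto
  have comb: "(\<Sum>w\<in>words (k - 2) m.
              \<Sum>P\<in>{P \<in> words_ab (m (k - 2)) (m (k - 1)).
                     (\<Sum>r=0..m (k - 2). S_count (k - 2) w r * pi_star True False P r) = n}.
                \<Prod>r=0..m (k - 2).
                  real ((pi_star True False P r + (\<Sum>l=1..k-3. pi_star (k - 2) l w r))
                         choose (pi_star True False P r))) = real (card ?WSn)"
    using comb_main[OF d1, of m n] unfolding e1 e2 .
  have mult: "multinom (map m [1..<k]) = real (card ?WS)"
    using card_words[of "k - 1" m] unfolding e3 by simp
  have WSpos: "card ?WS > 0"
    using finite_words[of "k-1" m] permutations_of_multiset_not_empty words_perm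
    by (metis card_gt_0_iff)
  define c where "c = real (card ?WSn) / real (card ?WS)"
  have c0: "c \<ge> 0" by (simp add: c_def)
  have rhs: "(1 / multinom (map m [1..<k])) * real (card ?WSn) = c"
    unfolding mult c_def by simp
  let ?EB = "{\<omega> \<in> space (PPP lam). (\<lambda>N x. x \<in> Bx m N) (fst \<omega>) (snd \<omega>)}"
  let ?EAB = "{\<omega> \<in> space (PPP lam). (\<lambda>N x. x \<in> ABx m n N) (fst \<omega>) (snd \<omega>)}"
  have sB: "{x. x \<in> Bx m N} \<in> sets PX" for N using ev_sets(1)[of N m] by (simp add: Bx_def)
  have sAB: "{x. x \<in> ABx m n N} \<in> sets PX" for N using ev_sets(2)[of N n m] by (simp add: ABx_def)
  have eB: "{\<omega> \<in> space (PPP lam). \<forall>j\<in>{1..k-1}. lens_count r0 k j \<omega> = m j} = ?EB"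
    by (auto simp: Bx_def)
  have eAB: "{\<omega> \<in> space (PPP lam). sigma_k r0 k \<omega> = n \<and> (\<forall>j\<in>{1..k-1}. lens_count r0 k j \<omega> = m j)} = ?EAB"
    by (auto simp: ABx_def)
  have mB: "emeasure (PPP lam) ?EB = (\<integral>\<^sup>+ N. of_nat (card ?WS) * Q N (Mt m) \<partial>measure_pmf (poisson_pmf lam))"
    using PPP_emeasure[of "\<lambda>N x. x \<in> Bx m N", OF sB] by (simp add: emeasure_Bx)
  have mAB: "emeasure (PPP lam) ?EAB = (\<integral>\<^sup>+ N. of_nat (card ?WSn) * Q N (Mt m) \<partial>measure_pmf (poisson_pmf lam))"
    using PPP_emeasure[of "\<lambda>N x. x \<in> ABx m n N", OF sAB] by (simp add: emeasure_ABx)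
  have cw: "of_nat (card ?WSn) = ennreal c * of_nat (card ?WS)"
  proof -
    have "ennreal c * of_nat (card ?WS) = ennreal (c * real (card ?WS))"
      using c0 by (simp add: ennreal_of_nat_eq_real_of_nat ennreal_mult)
    also have "c * real (card ?WS) = real (card ?WSn)" using WSpos by (simp add: c_def)
    finally show ?thesis by (simp add: ennreal_of_nat_eq_real_of_nat)
  qed
  have AB_B: "emeasure (PPP lam) ?EAB = ennreal c * emeasure (PPP lam) ?EB"
  proof -
    have "emeasure (PPP lam) ?EAB = (\<integral>\<^sup>+ N. ennreal c * (of_nat (card ?WS) * Q N (Mt m)) \<partial>measure_pmf (poisson_pmf lam))"
      unfolding mAB cw by (simp add: mult.assoc)
    also have "\<dots> = ennreal c * (\<integral>\<^sup>+ N. of_nat (card ?WS) * Q N (Mt m) \<partial>measure_pmf (poisson_pmf lam))"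
      by (rule nn_integral_cmult) simp
    finally show ?thesis unfolding mB .
  qed
  have probP: "prob_space (PPP lam)"
    unfolding PPP_def by (intro prob_space_pair prob_space_measure_pmf prob_PX)
  then have finP: "finite_measure (PPP lam)" by (simp add: prob_space_def)
  have mAB_B: "measure (PPP lam) ?EAB = c * measure (PPP lam) ?EB"
    using AB_B c0 by (simp add: measure_def enn2real_mult)
  have posB: "measure (PPP lam) ?EB > 0"
  proof -
    let ?M = "Mt m"
    have sub: "{?M} \<times> Bx m ?M \<subseteq> ?EB" by (auto simp: PPP_space)
    have sT: "{?M} \<times> Bx m ?M \<in> sets (PPP lam)"
      unfolding PPP_def using sB[of ?M] by (intro pair_measureI) auto
    have sEB: "?EB \<in> sets (PPP lam)" by (rule PPP_event[OF sB])
    have "emeasure (PPP lam) ({?M} \<times> Bx m ?M) = emeasure (measure_pmf (poisson_pmf lam)) {?M} * emeasure PX (Bx m ?M)"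
      unfolding PPP_def using sB[of ?M] by (intro PXp.P.emeasure_pair_measure_Times) auto
    also have "\<dots> = ennreal (pmf (poisson_pmf lam) ?M) * (of_nat (card ?WS) * Q ?M ?M)"
      by (simp add: emeasure_pmf_single emeasure_Bx)
    finally have eT: "emeasure (PPP lam) ({?M} \<times> Bx m ?M) = ennreal (pmf (poisson_pmf lam) ?M) * (of_nat (card ?WS) * Q ?M ?M)" .
    have pp: "pmf (poisson_pmf lam) ?M > 0" using assms(1) by (simp add: pmf_poisson)
    have "0 < ennreal (pmf (poisson_pmf lam) ?M) * (of_nat (card ?WS) * Q ?M ?M)"
      using pp WSpos Q_pos by (simp add: ennreal_zero_less_mult_iff)
    also have "\<dots> = emeasure (PPP lam) ({?M} \<times> Bx m ?M)" using eT by simp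
    also have "\<dots> \<le> emeasure (PPP lam) ?EB" by (rule emeasure_mono[OF sub sEB])
    finally have "0 < emeasure (PPP lam) ?EB" .
    then show ?thesis using finite_measure.emeasure_eq_measure[OF finP] by (simp add: ennreal_less_zero_iff measure_nonneg)
  qed
  have "cond_prob (PPP lam) (\<lambda>\<omega>. sigma_k r0 k \<omega> = n) (\<lambda>\<omega>. \<forall>j\<in>{1..k-1}. lens_count r0 k j \<omega> = m j)
      = measure (PPP lam) ?EAB / measure (PPP lam) ?EB"
    unfolding cond_prob_def eB eAB ..
  also have "\<dots> = c" using mAB_B posB by simp
  finally show ?thesis unfolding comb rhs .
qed


end
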